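(* Assume $n\neq2$. Let $\phi\in V^+$ be a polynomial solution of total degree $m$ with homogeneous components $\phi_0,\dots,\phi_m$, and write $\phi_d=\sum_{1\le\alpha_1\le\dots\le\alpha_d\le n}x^{\alpha_1}\cdots x^{\alpha_d}p_\alpha$ with $p_\alpha\in\mathrm{Cl}(\eta)$. Define $$\widehat{\phi_d}:=\sum_{1\le\alpha_1\le\dots\le\alpha_d\le n}\frac{1}{(-1)^d\prod_{k=1}^d(\frac n2+d-k)}\,\widehat{x^{\alpha_1}}\cdots\widehat{x^{\alpha_d}}\,\widetilde{p_\alpha}\in Z_n,$$ and $\widehat\phi:=\widehat{\phi_0}+\dots+\widehat{\phi_m}$. Then $\widehat\phi\cdot1=\phi$.
   Context: Fix $n\ge1$ and an invertible complex matrix $\eta=(\eta^{ij})$ with $\eta^{ij}=\eta^{ji}$ and inverse $(\eta_{ij})$. $\mathcal{A}=W(2n|n)$ is the associative superalgebra generated by even $x^1,\dots,x^n,\partial_1,\dots,\partial_n$ and odd $\gamma^1,\dots,\gamma^n$ with relations $x^ix^j=x^jx^i$, $\partial_i\partial_j=\partial_j\partial_i$, $\partial_ix^j-x^j\partial_i=\delta_i^j$, $\gamma^i$ commuting with $x^j,\partial_j$, $\gamma^i\gamma^j+\gamma^j\gamma^i=2\eta^{ij}$. Repeated indices are summed; $x_i=\eta_{ij}x^j$, $\partial^i=\eta^{ij}\partial_j$. $\mathcal{A}$ acts on $V=\mathrm{Cl}(\eta)\otimes\mathbb{C}[x^1,\dots,x^n]$ ($x^i,\gamma^i$ by left multiplication,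 $\partial_i$ by $\partial/\partial x^i$). $X=\frac{\sqrt{-1}}{\sqrt2}\gamma^i\partial_i$, $H=-\frac12(\partial_ix^i+x^i\partial_i)$, $E=-\frac12\partial^i\partial_i$, $V^+=\{v\in V:Xv=0\}$ (polynomial solutions of the massless Dirac equation). $I=\mathcal{A}X+\mathcal{A}E$, $Z_n=N_{\mathcal{A}}(I)/I$ with $N_{\mathcal{A}}(I)=\{a:Ia\subset I\}$; $Z_n$ acts on $V^+$. $\widehat{x^i}\in Z_n$ is the class of $(H+1)x^i+\frac12\gamma^jx_j\gamma^i+\frac12x^jx_j\partial^i$ and $\widehat{\gamma^i}\in Z_n$ the class of $(H+1)\gamma^i-\gamma^jx_j\partial^i$ (the paper asserts these lie in $N_{\mathcal{A}}(I)$); $\widetilde{\gamma}^i:=\frac{1}{1-n/2}\widehat{\gamma^i}$. For $p\in\mathrm{Cl}(\eta)$ written as $p=\sum c_\alpha\gamma^{\alpha_1}\cdots\gamma^{\alpha_r}$ (sum over $1\le\alpha_1<\dots<\alpha_r\le n$, $r\ge0$), set $\widetilde p:=\sum c_\alpha\widetilde\gamma^{\alpha_1}\cdots\widetilde\gamma^{\alpha_r}\in Z_n$. *)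

theory Defs
  imports Complex_Main
begin

text \<open>Indices are 0-based: 0,...,n-1 stand for the paper's 1,...,n.
  An element of V = Cl(eta) (x) C[x^0..x^(n-1)] is modelled by its coefficient
  function: v a S is the coefficient of the basis element x^a gamma^S, where
  a is an exponent vector and S a strictly increasing list of indices < n
  (gamma^S = gamma^(s1) ... gamma^(sr) for S = [s1,...,sr]).\<close>

type_synonym vec = "(nat \<Rightarrow> nat) \<Rightarrow> nat list \<Rightarrow> complex"

definition clb :: "nat \<Rightarrow> nat list set" where
  "clb n = {S. sorted_wrt (<) S \<and> set S \<subseteq> {..<n}}"

text \<open>Left multiplication in Cl(eta): gmul e i S is the coefficient function of
  gamma^i * gamma^S in the ordered monomial basis (for S strictly increasing),
  using gamma^i gamma^j + gamma^j gamma^i = 2 eta^(ij).\<close>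
fun gmul :: "(nat \<Rightarrow> nat \<Rightarrow> complex) \<Rightarrow> nat \<Rightarrow> nat list \<Rightarrow> nat list \<Rightarrow> complex" where
  "gmul e i [] = (\<lambda>T. if T = [i] then 1 else 0)"
| "gmul e i (s # w) =
     (if i < s then (\<lambda>T. if T = i # s # w then 1 else 0)
      else if i = s then (\<lambda>T. if T = w then e i i else 0)
      else (\<lambda>T. (case T of [] \<Rightarrow> 0 | t # T' \<Rightarrow> if t = s then - gmul e i w T' else 0)
                + (if T = w then 2 * e i s else 0)))"

definition vadd :: "vec \<Rightarrow> vec \<Rightarrow> vec" where
  "vadd v w = (\<lambda>a S. v a S + w a S)"

definition vscale :: "complex \<Rightarrow> vec \<Rightarrow> vec" where
  "vscale c v = (\<lambda>a S. c * v a S)"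

definition vsumS :: "'i set \<Rightarrow> ('i \<Rightarrow> vec) \<Rightarrow> vec" where
  "vsumS A f = (\<lambda>a S. \<Sum>k\<in>A. f k a S)"

definition vsum :: "nat \<Rightarrow> (nat \<Rightarrow> vec) \<Rightarrow> vec" where
  "vsum n f = vsumS {..<n} f"

definition xop :: "nat \<Rightarrow> vec \<Rightarrow> vec" where
  "xop i v = (\<lambda>a S. if 0 < a i then v (a(i := a i - 1)) S else 0)"

definition dop :: "nat \<Rightarrow> vec \<Rightarrow> vec" where
  "dop i v = (\<lambda>a S. of_nat (a i + 1) * v (a(i := Suc (a i))) S)"

definition gop :: "nat \<Rightarrow> (nat \<Rightarrow> nat \<Rightarrow> complex) \<Rightarrow> nat \<Rightarrow> vec \<Rightarrow> vec" where
  "gop n eU i v = (\<lambda>a T. \<Sum>S\<in>clb n. v a S * gmul eU i S T)"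

definition xlow :: "nat \<Rightarrow> (nat \<Rightarrow> nat \<Rightarrow> complex) \<Rightarrow> nat \<Rightarrow> vec \<Rightarrow> vec" where
  "xlow n eL j v = vsum n (\<lambda>k. vscale (eL j k) (xop k v))"

definition dup :: "nat \<Rightarrow> (nat \<Rightarrow> nat \<Rightarrow> complex) \<Rightarrow> nat \<Rightarrow> vec \<Rightarrow> vec" where
  "dup n eU i v = vsum n (\<lambda>j. vscale (eU i j) (dop j v))"

definition Hop :: "nat \<Rightarrow> vec \<Rightarrow> vec" where
  "Hop n v = vscale (-1/2) (vsum n (\<lambda>i. vadd (dop i (xop i v)) (xop i (dop i v))))"

definition Xop :: "nat \<Rightarrow> (nat \<Rightarrow> nat \<Rightarrow> complex) \<Rightarrow> vec \<Rightarrow> vec" where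
  "Xop n eU v = vscale (\<i> / complex_of_real (sqrt 2)) (vsum n (\<lambda>i. gop n eU i (dop i v)))"

definition vone :: vec where
  "vone = (\<lambda>a S. if a = (\<lambda>_. 0) \<and> S = [] then 1 else 0)"

definition is_vec :: "nat \<Rightarrow> vec \<Rightarrow> bool" where
  "is_vec n v \<longleftrightarrow> finite {(a, S). v a S \<noteq> 0}
     \<and> (\<forall>a S. v a S \<noteq> 0 \<longrightarrow> S \<in> clb n \<and> (\<forall>i\<ge>n. a i = 0))"

definition Vplus :: "nat \<Rightarrow> (nat \<Rightarrow> nat \<Rightarrow> complex) \<Rightarrow> vec set" where
  "Vplus n eU = {v. is_vec n v \<and> Xop n eU v = (\<lambda>a S. 0)}"

text \<open>Representatives of hat x^i, hat gamma^i, tilde gamma^i acting on V.\<close>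
definition xhat :: "nat \<Rightarrow> (nat \<Rightarrow> nat \<Rightarrow> complex) \<Rightarrow> (nat \<Rightarrow> nat \<Rightarrow> complex) \<Rightarrow> nat \<Rightarrow> vec \<Rightarrow> vec" where
  "xhat n eU eL i v =
     vadd (vadd (Hop n (xop i v)) (xop i v))
      (vadd (vscale (1/2) (vsum n (\<lambda>j. gop n eU j (xlow n eL j (gop n eU i v)))))
            (vscale (1/2) (vsum n (\<lambda>j. xop j (xlow n eL j (dup n eU i v))))))"

definition ghat :: "nat \<Rightarrow> (nat \<Rightarrow> nat \<Rightarrow> complex) \<Rightarrow> (nat \<Rightarrow> nat \<Rightarrow> complex) \<Rightarrow> nat \<Rightarrow> vec \<Rightarrow> vec" where
  "ghat n eU eL i v =
     vadd (vadd (Hop n (gop n eU i v)) (gop n eU i v))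
          (vscale (-1) (vsum n (\<lambda>j. gop n eU j (xlow n eL j (dup n eU i v)))))"

definition gtilde :: "nat \<Rightarrow> (nat \<Rightarrow> nat \<Rightarrow> complex) \<Rightarrow> (nat \<Rightarrow> nat \<Rightarrow> complex) \<Rightarrow> nat \<Rightarrow> vec \<Rightarrow> vec" where
  "gtilde n eU eL i v = vscale (1 / (1 - of_nat n / 2)) (ghat n eU eL i v)"

definition ptilde :: "nat \<Rightarrow> (nat \<Rightarrow> nat \<Rightarrow> complex) \<Rightarrow> (nat \<Rightarrow> nat \<Rightarrow> complex)
    \<Rightarrow> (nat list \<Rightarrow> complex) \<Rightarrow> vec \<Rightarrow> vec" where
  "ptilde n eU eL p v = vsumS (clb n) (\<lambda>S. vscale (p S) (foldr (gtilde n eU eL) S v))"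

definition mis :: "nat \<Rightarrow> nat \<Rightarrow> nat list set" where
  "mis n d = {al. length al = d \<and> sorted al \<and> set al \<subseteq> {..<n}}"

definition expo :: "nat list \<Rightarrow> nat \<Rightarrow> nat" where
  "expo al = (\<lambda>i. count_list al i)"

definition pcoef :: "vec \<Rightarrow> nat list \<Rightarrow> nat list \<Rightarrow> complex" where
  "pcoef v al = (\<lambda>S. v (expo al) S)"

definition mdeg :: "nat \<Rightarrow> (nat \<Rightarrow> nat) \<Rightarrow> nat" where
  "mdeg n a = (\<Sum>i<n. a i)"

definition hatcoef :: "nat \<Rightarrow> nat \<Rightarrow> complex" where
  "hatcoef n d = 1 / ((-1) ^ d * (\<Prod>k = 1..d. of_nat n / 2 + of_nat d - of_nat k))"

definition phihat_d :: "nat \<Rightarrow> (nat \<Rightarrow> nat \<Rightarrow> complex) \<Rightarrow> (nat \<Rightarrow> nat \<Rightarrow> complex) \<Rightarrow> vec \<Rightarrow> nat \<Rightarrow> vec \<Rightarrow> vec" where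
  "phihat_d n eU eL phi d w =
     vsumS (mis n d) (\<lambda>al. vscale (hatcoef n d)
        (foldr (xhat n eU eL) al (ptilde n eU eL (pcoef phi al) w)))"

definition phihat :: "nat \<Rightarrow> (nat \<Rightarrow> nat \<Rightarrow> complex) \<Rightarrow> (nat \<Rightarrow> nat \<Rightarrow> complex) \<Rightarrow> nat \<Rightarrow> vec \<Rightarrow> vec \<Rightarrow> vec" where
  "phihat n eU eL m phi w = vsumS {..m} (\<lambda>d. phihat_d n eU eL phi d w)"

end

theory Submission
  imports Defs "HOL-Library.Function_Algebras" "HOL-Library.Multiset"
begin

lemma clb_Cons: "s # w \<in> clb n \<longleftrightarrow> s < n \<and> (\<forall>x\<in>set w. s < x) \<and> w \<in> clb n"
  by (auto simp: clb_def)

lemma clb_Nil[simp]: "[] \<in> clb n"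
  by (simp add: clb_def)

lemma finite_clb[simp]: "finite (clb n)"
proof -
  have "clb n \<subseteq> {xs. set xs \<subseteq> {..<n} \<and> length xs \<le> n}"
  proof
    fix xs assume "xs \<in> clb n"
    hence s: "sorted_wrt (<) xs" "set xs \<subseteq> {..<n}" by (auto simp: clb_def)
    hence "distinct xs" using strict_sorted_iff by blast
    hence "length xs = card (set xs)" by (simp add: distinct_card)
    also have "\<dots> \<le> card {..<n}" using s by (intro card_mono) auto
    finally show "xs \<in> {xs. set xs \<subseteq> {..<n} \<and> length xs \<le> n}" using s by simp
  qed
  moreover have "finite {xs. set xs \<subseteq> {..<n} \<and> length xs \<le> n}"
    by (rule finite_lists_length_le) simp
  ultimately show ?thesis by (rule finite_subset)
qed

definition pre :: "nat \<Rightarrow> (nat list \<Rightarrow> complex) \<Rightarrow> nat list \<Rightarrow> complex" where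
  "pre s c = (\<lambda>T. case T of [] \<Rightarrow> 0 | t # T' \<Rightarrow> if t = s then c T' else 0)"

definition dl :: "nat list \<Rightarrow> nat list \<Rightarrow> complex" where
  "dl S = (\<lambda>T. if T = S then 1 else 0)"

definition sm :: "complex \<Rightarrow> (nat list \<Rightarrow> complex) \<Rightarrow> nat list \<Rightarrow> complex" where
  "sm a c = (\<lambda>T. a * c T)"

lemma pre_simps[simp]: "pre s c [] = 0" "pre s c (t # T) = (if t = s then c T else 0)"
  by (auto simp: pre_def)

lemma pre_lin[simp]: "pre s (c + d) = pre s c + pre s d" "pre s (- c) = - pre s c" "pre s (c - d) = pre s c - pre s d"
   "pre s (sm a c) = sm a (pre s c)" "pre s 0 = 0"
  by (auto simp: fun_eq_iff pre_def sm_def split: list.splits)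

lemma sm_simps[simp]: "sm a (c + d) = sm a c + sm a d" "sm a (- c) = - sm a c" "sm a (c - d) = sm a c - sm a d"
  "sm a (sm b c) = sm (a * b) c" "sm 1 c = c" "sm 0 c = 0" "sm a 0 = 0"
  by (auto simp: fun_eq_iff sm_def algebra_simps)

lemma dl_Cons: "dl (s # w) = pre s (dl w)"
  by (auto simp: fun_eq_iff dl_def pre_def split: list.splits)

locale cl =
  fixes n :: nat and e :: "nat \<Rightarrow> nat \<Rightarrow> complex"
  assumes esym: "\<And>i j. i < n \<Longrightarrow> j < n \<Longrightarrow> e i j = e j i"
begin

definition Lg :: "nat \<Rightarrow> (nat list \<Rightarrow> complex) \<Rightarrow> nat list \<Rightarrow> complex" where
  "Lg i c = (\<lambda>T. \<Sum>S\<in>clb n. c S * gmul e i S T)"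

definition sv :: "(nat list \<Rightarrow> complex) \<Rightarrow> bool" where
  "sv c \<longleftrightarrow> (\<forall>T. c T \<noteq> 0 \<longrightarrow> T \<in> clb n)"

definition sg :: "nat \<Rightarrow> (nat list \<Rightarrow> complex) \<Rightarrow> bool" where
  "sg s c \<longleftrightarrow> (\<forall>T. c T \<noteq> 0 \<longrightarrow> T \<in> clb n \<and> (\<forall>x\<in>set T. s < x))"

lemma gmul_supp:
  assumes "S \<in> clb n" "i < n" "gmul e i S T \<noteq> 0"
  shows "T \<in> clb n \<and> set T \<subseteq> insert i (set S)"
  using assms
proof (induction S arbitrary: T)
  case Nil
  then show ?case by (auto simp: clb_def split: if_splits)
next
  case (Cons s w)
  have w: "w \<in> clb n" "s < n" "\<forall>x\<in>set w. s < x" using Cons.prems(1) by (auto simp: clb_Cons)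
  show ?case
  proof (cases "i < s")
    case True
    then show ?thesis using Cons.prems w by (auto simp: clb_Cons split: if_splits)
  next
    case False
    show ?thesis
    proof (cases "i = s")
      case True
      then show ?thesis using Cons.prems w by (auto split: if_splits)
    next
      case False
      with \<open>\<not> i < s\<close> have gt: "s < i" by simp
      show ?thesis
      proof (cases T)
        case Nil
        then show ?thesis using Cons.prems w gt by (auto split: if_splits)
      next
        case (Cons t T')
        show ?thesis
        proof (cases "T = w")
          case True
          then show ?thesis using w by auto
        next
          case False
          hence "t = s" "gmul e i w T' \<noteq> 0" using Cons.prems gt \<open>T = t # T'\<close> by (auto split: if_splits)
          with Cons.IH[OF w(1) \<open>i < n\<close>] have "T' \<in> clb n" "set T' \<subseteq> insert i (set w)" by auto
          then show ?thesis using \<open>T = t # T'\<close> \<open>t = s\<close> w gt by (auto simp: clb_Cons)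
        qed
      qed
    qed
  qed
qed

lemma Lg_lin[simp]: "Lg i (c + d) = Lg i c + Lg i d" "Lg i (- c) = - Lg i c" "Lg i (c - d) = Lg i c - Lg i d"
   "Lg i (sm a c) = sm a (Lg i c)" "Lg i 0 = 0"
  by (auto simp: fun_eq_iff Lg_def sm_def sum.distrib algebra_simps sum_distrib_left
     sum_negf[symmetric] sum_subtractf[symmetric])

lemma Lg_dl: "S \<in> clb n \<Longrightarrow> Lg i (dl S) = gmul e i S"
  by (simp add: fun_eq_iff Lg_def dl_def if_distrib[of "\<lambda>x. x * _"] cong: if_cong)

lemma Lg_sv: "i < n \<Longrightarrow> sv (Lg i c)"
proof -
  assume i: "i < n"
  { fix T assume "Lg i c T \<noteq> 0"
    then obtain S where "S \<in> clb n" "gmul e i S T \<noteq> 0"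
      unfolding Lg_def by (metis (no_types, lifting) mult_zero_right sum.neutral)
    then have "T \<in> clb n" using gmul_supp i by blast }
  then show ?thesis by (auto simp: sv_def)
qed

lemma Lg_sg: "i < n \<Longrightarrow> s < i \<Longrightarrow> sg s c \<Longrightarrow> sg s (Lg i c)"
proof -
  assume i: "i < n" "s < i" "sg s c"
  { fix T assume "Lg i c T \<noteq> 0"
    then obtain S where "S \<in> clb n" "gmul e i S T \<noteq> 0" "c S \<noteq> 0"
      unfolding Lg_def by (metis (no_types, lifting) mult_zero_right mult_zero_left sum.neutral)
    then have "T \<in> clb n \<and> (\<forall>x\<in>set T. s < x)" using gmul_supp[of S i T] i unfolding sg_def by auto }
  then show ?thesis by (auto simp: sg_def)
qed

lemma sum_pre:
  assumes "sg s c" "s < n"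
  shows "(\<Sum>S\<in>clb n. pre s c S * f S) = (\<Sum>S\<in>clb n. c S * f (s # S))"
proof -
  let ?B = "{S\<in>clb n. \<forall>x\<in>set S. s < x}"
  have "(\<Sum>S\<in>clb n. pre s c S * f S) = (\<Sum>S\<in>Cons s ` ?B. pre s c S * f S)"
  proof (rule sum.mono_neutral_right[OF finite_clb])
    show "Cons s ` ?B \<subseteq> clb n" using assms by (auto simp: clb_Cons)
    show "\<forall>i\<in>clb n - Cons s ` ?B. pre s c i * f i = 0"
    proof
      fix T assume T: "T \<in> clb n - Cons s ` ?B"
      show "pre s c T * f T = 0"
      proof (cases T)
        case (Cons t T')
        then show ?thesis using T assms(1) unfolding sg_def by auto
      qed simp
    qed
  qed
  also have "\<dots> = (\<Sum>S\<in>?B. c S * f (s # S))"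
    by (subst sum.reindex) (auto simp: inj_on_def)
  also have "\<dots> = (\<Sum>S\<in>clb n. c S * f (s # S))"
    by (rule sum.mono_neutral_left[OF finite_clb]) (use assms in \<open>auto simp: sg_def\<close>)
  finally show ?thesis .
qed

lemma sum_pick:
  assumes "sv c"
  shows "(\<Sum>S\<in>clb n. c S * (if X = S then a else 0)) = a * c X"
proof (cases "X \<in> clb n")
  case True
  then show ?thesis by (simp add: if_distrib cong: if_cong)
next
  case False
  then have "c X = 0" using assms by (auto simp: sv_def)
  moreover have "(\<Sum>S\<in>clb n. c S * (if X = S then a else 0)) = 0"
    using False by (intro sum.neutral) auto
  ultimately show ?thesis by simp
qed

lemma sg_sv: "sg s c \<Longrightarrow> sv c" by (auto simp: sg_def sv_def)

lemma Lg_pre_lt: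
  assumes "sg s c" "s < n" "i < s"
  shows "Lg i (pre s c) = pre i (pre s c)"
proof
  fix T
  have "Lg i (pre s c) T = (\<Sum>S\<in>clb n. c S * (if T = i # s # S then 1 else 0))"
    unfolding Lg_def using assms by (simp add: sum_pre)
  also have "\<dots> = pre i (pre s c) T"
  proof (cases "\<exists>T'. T = i # s # T'")
    case True
    then obtain T' where "T = i # s # T'" by blast
    then show ?thesis using sum_pick[OF sg_sv[OF assms(1)], of T' 1] by (simp add: eq_commute)
  next
    case False
    then have "(\<Sum>S\<in>clb n. c S * (if T = i # s # S then 1 else 0)) = 0" by (intro sum.neutral) auto
    moreover have "pre i (pre s c) T = 0" using False
      by (cases T; cases "tl T") (auto simp: pre_def split: list.splits)
    ultimately show ?thesis by simp
  qed
  finally show "Lg i (pre s c) T = pre i (pre s c) T" .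
qed

lemma Lg_pre_eq:
  assumes "sg s c" "s < n"
  shows "Lg s (pre s c) = sm (e s s) c"
proof
  fix T
  have "Lg s (pre s c) T = (\<Sum>S\<in>clb n. c S * (if T = S then e s s else 0))"
    unfolding Lg_def using assms by (simp add: sum_pre)
  also have "\<dots> = sm (e s s) c T" using sum_pick[OF sg_sv[OF assms(1)], of T] by (simp add: sm_def)
  finally show "Lg s (pre s c) T = sm (e s s) c T" .
qed

lemma Lg_pre_gt:
  assumes "sg s c" "s < n" "s < i"
  shows "Lg i (pre s c) = - pre s (Lg i c) + sm (2 * e i s) c"
proof
  fix T
  have "Lg i (pre s c) T = (\<Sum>S\<in>clb n. c S * ((case T of [] \<Rightarrow> 0 | t # T' \<Rightarrow> if t = s then - gmul e i S T' else 0)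
                + (if T = S then 2 * e i s else 0)))"
    unfolding Lg_def using assms by (simp add: sum_pre)
  also have "\<dots> = (\<Sum>S\<in>clb n. c S * (case T of [] \<Rightarrow> 0 | t # T' \<Rightarrow> if t = s then - gmul e i S T' else 0))
       + (\<Sum>S\<in>clb n. c S * (if T = S then 2 * e i s else 0))"
    by (simp add: distrib_left sum.distrib)
  also have "(\<Sum>S\<in>clb n. c S * (if T = S then 2 * e i s else 0)) = sm (2 * e i s) c T"
    using sum_pick[OF sg_sv[OF assms(1)], of T] by (simp add: sm_def)
  also have "(\<Sum>S\<in>clb n. c S * (case T of [] \<Rightarrow> 0 | t # T' \<Rightarrow> if t = s then - gmul e i S T' else 0))
      = (- pre s (Lg i c)) T"
    by (cases T) (auto simp: Lg_def sum_negf[symmetric])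
  finally show "Lg i (pre s c) T = (- pre s (Lg i c) + sm (2 * e i s) c) T" by simp
qed


lemma Lg_dl_small: "S \<in> clb n \<Longrightarrow> (\<forall>x\<in>set S. i < x) \<Longrightarrow> Lg i (dl S) = pre i (dl S)"
proof -
  assume a: "S \<in> clb n" "\<forall>x\<in>set S. i < x"
  have "Lg i (dl S) = gmul e i S" by (rule Lg_dl[OF a(1)])
  also have "\<dots> = pre i (dl S)" using a by (cases S) (auto simp: fun_eq_iff dl_def pre_def split: list.splits)
  finally show ?thesis .
qed

lemma sg_dl: "S \<in> clb n \<Longrightarrow> (\<forall>x\<in>set S. i < x) \<Longrightarrow> sg i (dl S)"
  by (auto simp: sg_def dl_def)

lemma sg_pre: "sg s c \<Longrightarrow> i < s \<Longrightarrow> s < n \<Longrightarrow> sg i (pre s c)"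
  unfolding sg_def pre_def by (auto simp: clb_Cons split: list.splits if_splits) (meson less_trans)

lemma Lg_pre_cases:
  assumes "sg s c" "s < n"
  shows "Lg i (pre s c) = (if i < s then pre i (pre s c) else if i = s then sm (e s s) c
           else - pre s (Lg i c) + sm (2 * e i s) c)"
  using Lg_pre_lt[OF assms] Lg_pre_eq[OF assms] Lg_pre_gt[OF assms] by auto

lemma anti_small:
  assumes "S \<in> clb n" "i < n" "j < n" "\<forall>x\<in>set S. i < x" "\<forall>x\<in>set S. j < x"
  shows "Lg i (Lg j (dl S)) + Lg j (Lg i (dl S)) = sm (2 * e i j) (dl S)"
proof -
  have A: "Lg j (dl S) = pre j (dl S)" "Lg i (dl S) = pre i (dl S)"
    using Lg_dl_small assms by auto
  have sj: "sg j (dl S)" and si: "sg i (dl S)" using sg_dl assms by auto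
  show ?thesis
    using assms(2,3) unfolding A Lg_pre_cases[OF sj assms(3)] Lg_pre_cases[OF si assms(2)]
    by (auto simp: A fun_eq_iff sm_def algebra_simps esym[of i j])
qed

lemma anti_dl:
  assumes "S \<in> clb n" "i < n" "j < n"
  shows "Lg i (Lg j (dl S)) + Lg j (Lg i (dl S)) = sm (2 * e i j) (dl S)"
  using assms
proof (induction S arbitrary: i j)
  case Nil
  then show ?case using anti_small by simp
next
  case (Cons s w)
  have w: "w \<in> clb n" "s < n" "\<forall>x\<in>set w. s < x" using Cons.prems(1) by (auto simp: clb_Cons)
  define d where "d = dl w"
  have S: "dl (s # w) = pre s d" by (simp add: d_def dl_Cons)
  have sd: "sg s d" using sg_dl w d_def by auto
  have small: "k < s \<Longrightarrow> Lg k d = pre k d" for k using Lg_dl_small[of w k] w d_def less_trans by blast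
  have Ls: "Lg s d = pre s d" using Lg_dl_small w d_def by blast
  have sgL: "s < k \<Longrightarrow> k < n \<Longrightarrow> sg s (Lg k d)" for k using Lg_sg sd by auto
  have sgp: "k < s \<Longrightarrow> sg k (pre s d)" for k using sg_pre sd w by auto
  have P: "Lg k (pre s d) = (if k < s then pre k (pre s d) else if k = s then sm (e s s) d
           else - pre s (Lg k d) + sm (2 * e k s) d)" for k using Lg_pre_cases[OF sd w(2)] by simp
  have sym: "Lg i (Lg j X) + Lg j (Lg i X) = Lg j (Lg i X) + Lg i (Lg j X)" for X by (simp add: add.commute)
  have main: "Lg i (Lg j (pre s d)) + Lg j (Lg i (pre s d)) = sm (2 * e i j) (pre s d)"
    if ij: "i \<le> j" "i < n" "j < n" for i j
  proof -
    consider "j < s" | "i < s" "j = s" | "i = s" "j = s" | "i < s" "s < j" | "i = s" "s < j" | "s < i" "s < j"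
      using ij by linarith
    then show ?thesis
    proof cases
      case 1
      have "\<forall>x\<in>set w. i < x" "\<forall>x\<in>set w. j < x" using w 1 ij by auto
      then show ?thesis using anti_small[of "s # w" i j] Cons.prems(1) w ij S 1 by (auto simp: clb_Cons)
    next
      case 2
      have r: "Lg s (pre i (pre s d)) = - pre i (Lg s (pre s d)) + sm (2 * e s i) (pre s d)"
        using Lg_pre_cases[OF sgp[of i], of s] 2 ij by simp
      show ?thesis using ij 2
        apply (simp add: P small r w)
        using esym[of i s] ij w(2) by (simp add: fun_eq_iff sm_def algebra_simps)
    next
      case 3
      show ?thesis using ij 3
        apply (simp add: P Ls w)
        by (simp add: fun_eq_iff sm_def algebra_simps)
    next
      case 4
      have r1: "Lg i (pre s (Lg j d)) = pre i (pre s (Lg j d))"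
        using Lg_pre_lt[OF sgL[of j]] 4 ij w by simp
      have r2: "Lg j (pre i (pre s d)) = - pre i (Lg j (pre s d)) + sm (2 * e j i) (pre s d)"
        using Lg_pre_gt[OF sgp[of i]] 4 ij w by simp
      show ?thesis using ij 4
        apply (simp add: P small r1 r2 w)
        using esym[of i j] ij w(2) by (simp add: fun_eq_iff sm_def algebra_simps)
    next
      case 5
      have r1: "Lg s (pre s (Lg j d)) = sm (e s s) (Lg j d)"
        using Lg_pre_eq[OF sgL[of j]] 5 ij w by simp
      show ?thesis using ij 5
        apply (simp add: P Ls r1 w)
        using esym[of j s] ij w(2) by (simp add: fun_eq_iff sm_def algebra_simps)
    next
      case 6
      have IH: "Lg i (Lg j d) + Lg j (Lg i d) = sm (2 * e i j) d" unfolding d_def by (rule Cons.IH[OF w(1)]) (use ij in auto)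
      have "Lg i (Lg j (pre s d)) + Lg j (Lg i (pre s d)) = pre s (Lg i (Lg j d) + Lg j (Lg i d))
            + sm (2 * e j s) (Lg i d) - sm (2 * e i s) (Lg j d) + sm (2 * e i s) (Lg j d) - sm (2 * e j s) (Lg i d)"
      proof -
        have r1: "Lg i (pre s (Lg j d)) = - pre s (Lg i (Lg j d)) + sm (2 * e i s) (Lg j d)"
          by (rule Lg_pre_gt[OF sgL[of j]]) (use 6 ij w in auto)
        have r2: "Lg j (pre s (Lg i d)) = - pre s (Lg j (Lg i d)) + sm (2 * e j s) (Lg i d)"
          by (rule Lg_pre_gt[OF sgL[of i]]) (use 6 ij w in auto)
        show ?thesis using 6 ij by (simp add: P r1 r2 w algebra_simps)
      qed
      also have "\<dots> = sm (2 * e i j) (pre s d)" unfolding IH by simp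
      finally show ?thesis .
    qed
  qed
  show ?case
  proof (cases "i \<le> j")
    case True
    then show ?thesis using main Cons.prems S by simp
  next
    case False
    then show ?thesis using main[of j i] Cons.prems S esym[of i j] by (simp add: add.commute)
  qed
qed

lemma anti:
  assumes "sv c" "i < n" "j < n"
  shows "Lg i (Lg j c) + Lg j (Lg i c) = sm (2 * e i j) c"
proof
  fix T
  have ex: "Lg i (Lg j c) T = (\<Sum>S\<in>clb n. c S * Lg i (Lg j (dl S)) T)" for i j
  proof -
    have "Lg i (Lg j c) T = (\<Sum>S'\<in>clb n. (\<Sum>S\<in>clb n. c S * gmul e j S S') * gmul e i S' T)"
      by (simp add: Lg_def)
    also have "\<dots> = (\<Sum>S'\<in>clb n. \<Sum>S\<in>clb n. c S * (gmul e j S S' * gmul e i S' T))"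
      by (simp add: sum_distrib_right mult.assoc)
    also have "\<dots> = (\<Sum>S\<in>clb n. \<Sum>S'\<in>clb n. c S * (gmul e j S S' * gmul e i S' T))"
      by (rule sum.swap)
    also have "\<dots> = (\<Sum>S\<in>clb n. c S * (\<Sum>S'\<in>clb n. gmul e j S S' * gmul e i S' T))"
      by (simp add: sum_distrib_left)
    also have "\<dots> = (\<Sum>S\<in>clb n. c S * Lg i (Lg j (dl S)) T)"
    proof (intro sum.cong refl)
      fix S assume "S \<in> clb n"
      then have "Lg i (Lg j (dl S)) T = Lg i (gmul e j S) T" by (simp add: Lg_dl)
      then show "c S * (\<Sum>S'\<in>clb n. gmul e j S S' * gmul e i S' T) = c S * Lg i (Lg j (dl S)) T"
        by (simp add: Lg_def)
    qed
    finally show ?thesis .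
  qed
  have "(Lg i (Lg j c) + Lg j (Lg i c)) T = (\<Sum>S\<in>clb n. c S * (Lg i (Lg j (dl S)) + Lg j (Lg i (dl S))) T)"
    by (simp add: ex distrib_left sum.distrib)
  also have "\<dots> = (\<Sum>S\<in>clb n. c S * (if T = S then 2 * e i j else 0))"
  proof (intro sum.cong refl)
    fix S assume S: "S \<in> clb n"
    have "(Lg i (Lg j (dl S)) + Lg j (Lg i (dl S))) T = sm (2 * e i j) (dl S) T"
      using anti_dl[OF S assms(2,3)] by simp
    then show "c S * (Lg i (Lg j (dl S)) + Lg j (Lg i (dl S))) T = c S * (if T = S then 2 * e i j else 0)"
      by (simp add: sm_def dl_def)
  qed
  also have "\<dots> = sm (2 * e i j) c T" using sum_pick[OF assms(1)] by (simp add: sm_def)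
  finally show "(Lg i (Lg j c) + Lg j (Lg i c)) T = sm (2 * e i j) c T" .
qed

end

lemma sum_fun_apply: "(sum f K) x = sum (\<lambda>k. f k x) K"
  by (induction K rule: infinite_finite_induct) auto

lemma vadd_eq: "vadd v w = v + w" by (simp add: vadd_def fun_eq_iff)
lemma vsumS_eq: "vsumS K f = sum f K" by (simp add: vsumS_def fun_eq_iff sum_fun_apply)
lemma vsum_eq: "vsum n f = (\<Sum>k<n. f k)" by (simp add: vsum_def vsumS_eq)

lemma vscale_apply: "vscale c v a S = c * v a S" by (simp add: vscale_def)

lemma vscale_simps[simp]:
  "vscale c (v + w) = vscale c v + vscale c w"
  "vscale c (- v) = - vscale c v"
  "vscale c (v - w) = vscale c v - vscale c w"
  "vscale c (vscale d v) = vscale (c * d) v"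
  "vscale 1 v = v" "vscale 0 v = 0" "vscale c 0 = 0"
  by (auto simp: fun_eq_iff vscale_def algebra_simps)

lemma vscale_sum: "vscale c (sum f K) = (\<Sum>k\<in>K. vscale c (f k))"
  by (simp add: fun_eq_iff vscale_def sum_fun_apply sum_distrib_left)

lemma vscale_add_left: "vscale c v + vscale d v = vscale (c + d) v"
  by (simp add: fun_eq_iff vscale_def algebra_simps)

lemma vscale_sum_left: "(\<Sum>k\<in>K. vscale (f k) v) = vscale (\<Sum>k\<in>K. f k) v"
  by (simp add: fun_eq_iff vscale_def sum_fun_apply sum_distrib_right)

lemma vscale_neg_left: "vscale (- c) v = - vscale c v"
  by (simp add: fun_eq_iff vscale_def)

lemma if1_mult: "(if P then (1::complex) else 0) * x = (if P then x else 0)" by simp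

definition lin :: "(vec \<Rightarrow> vec) \<Rightarrow> bool" where
  "lin F \<longleftrightarrow> (\<forall>v w. F (v + w) = F v + F w) \<and> (\<forall>c v. F (vscale c v) = vscale c (F v))"

lemma lin_add: "lin F \<Longrightarrow> F (v + w) = F v + F w" by (simp add: lin_def)
lemma lin_scale: "lin F \<Longrightarrow> F (vscale c v) = vscale c (F v)" by (simp add: lin_def)
lemma lin_zero: "lin F \<Longrightarrow> F 0 = 0" using lin_scale[of F 0 0] by simp
lemma lin_neg: "lin F \<Longrightarrow> F (- v) = - F v"
proof -
  assume l: "lin F"
  have e: "vscale (-1) w = - w" for w by (simp add: vscale_def fun_eq_iff)
  have "F (- v) = F (vscale (-1) v)" by (simp add: e)
  also have "\<dots> = vscale (-1) (F v)" by (rule lin_scale[OF l])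
  finally show ?thesis by (simp add: e)
qed
lemma lin_diff: "lin F \<Longrightarrow> F (v - w) = F v - F w"
proof -
  assume l: "lin F"
  have "F (v - w) = F (v + - w)" by (simp only: diff_conv_add_uminus)
  also have "\<dots> = F v + - F w" by (simp only: lin_add[OF l] lin_neg[OF l])
  finally show ?thesis by (simp only: diff_conv_add_uminus)
qed
lemma lin_sum: assumes l: "lin F" shows "F (sum f K) = (\<Sum>k\<in>K. F (f k))"
proof (induction K rule: infinite_finite_induct)
  case (infinite A)
  then show ?case by (simp only: sum.infinite[OF infinite] lin_zero[OF l])
next
  case empty
  then show ?case by (simp only: sum.empty lin_zero[OF l])
next
  case (insert x F')
  then show ?case by (simp only: sum.insert[OF insert(1,2)] lin_add[OF l] insert(3))
qed

lemma lin_comp: "lin F \<Longrightarrow> lin G \<Longrightarrow> lin (\<lambda>v. F (G v))" unfolding lin_def by simp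
lemma lin_sumop: assumes l: "\<And>k. k \<in> K \<Longrightarrow> lin (F k)" shows "lin (\<lambda>v. \<Sum>k\<in>K. F k v)"
  unfolding lin_def
proof (intro conjI allI)
  fix v w
  have "(\<Sum>k\<in>K. F k (v + w)) = (\<Sum>k\<in>K. F k v + F k w)"
    by (rule sum.cong[OF refl]) (rule lin_add[OF l])
  then show "(\<Sum>k\<in>K. F k (v + w)) = (\<Sum>k\<in>K. F k v) + (\<Sum>k\<in>K. F k w)"
    by (simp only: sum.distrib)
next
  fix c v
  have "(\<Sum>k\<in>K. F k (vscale c v)) = (\<Sum>k\<in>K. vscale c (F k v))"
    by (rule sum.cong[OF refl]) (rule lin_scale[OF l])
  then show "(\<Sum>k\<in>K. F k (vscale c v)) = vscale c (\<Sum>k\<in>K. F k v)"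
    by (simp only: vscale_sum)
qed
lemma lin_scaleop: "lin F \<Longrightarrow> lin (\<lambda>v. vscale c (F v))"
  unfolding lin_def by (simp add: mult.commute)
lemma lin_plusop: "lin F \<Longrightarrow> lin G \<Longrightarrow> lin (\<lambda>v. F v + G v)"
  unfolding lin_def by (simp add: add_ac)

lemma lin_xop: "lin (xop i)" by (auto simp: lin_def xop_def fun_eq_iff vscale_def)
lemma lin_dop: "lin (dop i)" by (auto simp: lin_def dop_def fun_eq_iff vscale_def algebra_simps)
lemma lin_gop: "lin (gop n e i)"
  by (auto simp: lin_def gop_def fun_eq_iff vscale_def algebra_simps sum.distrib sum_distrib_left)

lemma xop_xop: "xop i (xop j v) = xop j (xop i v)"
  by (cases "i = j") (auto simp: xop_def fun_eq_iff fun_upd_twist)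

lemma dop_dop: "dop i (dop j v) = dop j (dop i v)"
  by (cases "i = j") (auto simp: dop_def fun_eq_iff fun_upd_twist algebra_simps)

lemma dop_xop: "dop i (xop j v) = xop j (dop i v) + (if i = j then v else 0)"
proof (cases "i = j")
  case True
  show ?thesis
  proof (rule ext, rule ext)
    fix a S
    show "dop i (xop j v) a S = (xop j (dop i v) + (if i = j then v else 0)) a S"
      using True by (cases "a i") (auto simp: dop_def xop_def algebra_simps fun_upd_idem)
  qed
next
  case False
  then show ?thesis by (auto simp: dop_def xop_def fun_eq_iff fun_upd_twist)
qed

lemma gop_xop: "gop n e i (xop j v) = xop j (gop n e i v)"
  by (auto simp: gop_def xop_def fun_eq_iff)
lemma gop_dop: "gop n e i (dop j v) = dop j (gop n e i v)"
  by (auto simp: gop_def dop_def fun_eq_iff sum_distrib_left algebra_simps)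


lemma mdeg_upd: "i < n \<Longrightarrow> mdeg n (a(i := x)) + a i = mdeg n a + x"
proof -
  assume i: "i < n"
  have "mdeg n (a(i := x)) = x + (\<Sum>j\<in>{..<n} - {i}. a j)"
    unfolding mdeg_def using i by (simp add: sum.remove[of "{..<n}" i])
  moreover have "mdeg n a = a i + (\<Sum>j\<in>{..<n} - {i}. a j)"
    unfolding mdeg_def using i by (simp add: sum.remove[of "{..<n}" i])
  ultimately show ?thesis by simp
qed

definition hom :: "nat \<Rightarrow> nat \<Rightarrow> vec \<Rightarrow> bool" where
  "hom n k v \<longleftrightarrow> (\<forall>a S. v a S \<noteq> 0 \<longrightarrow> mdeg n a = k)"

lemma mdeg_inc: "i < n \<Longrightarrow> mdeg n (a(i := Suc (a i))) = Suc (mdeg n a)"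
  using mdeg_upd[of i n a "Suc (a i)"] by simp
lemma mdeg_dec: "i < n \<Longrightarrow> 0 < a i \<Longrightarrow> Suc (mdeg n (a(i := a i - 1))) = mdeg n a"
  using mdeg_upd[of i n a "a i - 1"] by simp

lemma hom_xop: assumes "i < n" "hom n k v" shows "hom n (Suc k) (xop i v)"
  unfolding hom_def
proof (intro allI impI)
  fix a S assume "xop i v a S \<noteq> 0"
  then have "0 < a i" "v (a(i := a i - 1)) S \<noteq> 0" by (auto simp: xop_def split: if_splits)
  then have "mdeg n (a(i := a i - 1)) = k" using assms(2) by (auto simp: hom_def)
  then show "mdeg n a = Suc k" using mdeg_dec[of i n a, OF assms(1) \<open>0 < a i\<close>] by simp
qed

lemma hom_dop: assumes "i < n" "hom n (Suc k) v" shows "hom n k (dop i v)"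
  unfolding hom_def
proof (intro allI impI)
  fix a S assume "dop i v a S \<noteq> 0"
  then have "v (a(i := Suc (a i))) S \<noteq> 0" by (auto simp: dop_def)
  then have "mdeg n (a(i := Suc (a i))) = Suc k" using assms(2) by (auto simp: hom_def)
  then show "mdeg n a = k" using mdeg_inc[OF assms(1)] by simp
qed

lemma hom0_dop: assumes "i < n" "hom n 0 v" shows "dop i v = 0"
proof (rule ext, rule ext)
  fix a S
  show "dop i v a S = 0 a S"
  proof (rule ccontr)
    assume "dop i v a S \<noteq> 0 a S"
    then have "v (a(i := Suc (a i))) S \<noteq> 0" by (auto simp: dop_def)
    then have "mdeg n (a(i := Suc (a i))) = 0" using assms(2) by (auto simp: hom_def)
    then show False using mdeg_inc[OF assms(1)] by simp
  qed
qed

lemma hom_intro: "(\<And>a S. mdeg n a \<noteq> k \<Longrightarrow> w a S = 0) \<Longrightarrow> hom n k w"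
  unfolding hom_def by blast
lemma homD: "hom n k v \<Longrightarrow> mdeg n a \<noteq> k \<Longrightarrow> v a S = 0"
  unfolding hom_def by blast

lemma hom_gop: "hom n k v \<Longrightarrow> hom n k (gop n e i v)"
  by (rule hom_intro) (simp add: gop_def homD)
lemma hom_add: "hom n k v \<Longrightarrow> hom n k w \<Longrightarrow> hom n k (v + w)"
  by (rule hom_intro) (simp add: homD)
lemma hom_scale: "hom n k v \<Longrightarrow> hom n k (vscale c v)"
  by (rule hom_intro) (simp add: homD vscale_def)
lemma hom_zero: "hom n k 0" unfolding hom_def by auto
lemma hom_neg: "hom n k v \<Longrightarrow> hom n k (- v)" by (rule hom_intro) (simp add: homD)
lemma hom_diff: "hom n k v \<Longrightarrow> hom n k w \<Longrightarrow> hom n k (v - w)" by (rule hom_intro) (simp add: homD)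
lemma hom_sum: assumes "\<And>j. j \<in> K \<Longrightarrow> hom n k (f j)" shows "hom n k (sum f K)"
proof (rule hom_intro)
  fix a S assume m: "mdeg n a \<noteq> k"
  have "f j a S = 0" if "j \<in> K" for j using homD[OF assms[OF that] m] .
  then show "sum f K a S = 0" by (simp add: sum_fun_apply)
qed

definition comp :: "nat \<Rightarrow> nat \<Rightarrow> vec \<Rightarrow> vec" where
  "comp n j v = (\<lambda>a S. if mdeg n a = j then v a S else 0)"

lemma lin_comp_op: "lin (comp n j)" by (auto simp: lin_def comp_def fun_eq_iff vscale_def)
lemma hom_comp: "hom n j (comp n j v)" by (simp add: hom_def comp_def)
lemma comp_all_zero: "(\<And>j. comp n j v = 0) \<Longrightarrow> v = 0"
proof (rule ext, rule ext)
  fix a S assume "\<And>j. comp n j v = 0"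
  then have "comp n (mdeg n a) v a S = 0" by simp
  then show "v a S = 0 a S" by (simp add: comp_def)
qed

lemma mdeg_dec': "i < n \<Longrightarrow> 0 < a i \<Longrightarrow> mdeg n (a(i := a i - 1)) = j \<longleftrightarrow> mdeg n a = Suc j"
  using mdeg_dec[of i n a] by auto
lemma mdeg_dec'': "i < n \<Longrightarrow> 0 < a i \<Longrightarrow> mdeg n (a(i := a i - Suc 0)) = j \<longleftrightarrow> mdeg n a = Suc j"
  using mdeg_dec'[of i n a] by simp

lemma comp_xop: "i < n \<Longrightarrow> comp n (Suc j) (xop i v) = xop i (comp n j v)"
  unfolding comp_def xop_def fun_eq_iff
  by (auto simp: mdeg_dec' mdeg_dec'')

lemma comp_dop: "i < n \<Longrightarrow> comp n j (dop i v) = dop i (comp n (Suc j) v)"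
  unfolding comp_def dop_def fun_eq_iff
  by (auto simp: mdeg_inc)

lemma comp_gop: "comp n j (gop n e i v) = gop n e i (comp n j v)"
  unfolding comp_def gop_def fun_eq_iff by auto

lemma comp_scale: "comp n j (vscale c v) = vscale c (comp n j v)"
  by (auto simp: comp_def vscale_def fun_eq_iff)

locale wk =
  fixes n :: nat and eU eL :: "nat \<Rightarrow> nat \<Rightarrow> complex"
  assumes n1: "1 \<le> n"
    and symU: "\<And>i j. i < n \<Longrightarrow> j < n \<Longrightarrow> eU i j = eU j i"
    and inv: "\<And>i j. i < n \<Longrightarrow> j < n \<Longrightarrow> (\<Sum>k<n. eU i k * eL k j) = (if i = j then 1 else 0)"
begin

sublocale cl n eU by unfold_locales (rule symU)

lemma symL: assumes ij: "i < n" "j < n" shows "eL i j = eL j i"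
proof -
  have left: "(\<Sum>l<n. eL l i * eU l k) = (if k = i then 1 else 0)" if "k < n" for k
  proof -
    have "(\<Sum>l<n. eL l i * eU l k) = (\<Sum>l<n. eU k l * eL l i)"
      by (intro sum.cong refl) (simp add: symU that mult.commute)
    then show ?thesis using inv[OF that ij(1)] by simp
  qed
  have "eL i j = (\<Sum>k<n. (if k = i then 1 else 0) * eL k j)" using ij by (simp add: if1_mult)
  also have "\<dots> = (\<Sum>k<n. (\<Sum>l<n. eL l i * eU l k) * eL k j)"
    by (intro sum.cong refl) (simp add: left)
  also have "\<dots> = (\<Sum>k<n. \<Sum>l<n. eL l i * (eU l k * eL k j))"
    by (simp add: sum_distrib_right mult.assoc)
  also have "\<dots> = (\<Sum>l<n. \<Sum>k<n. eL l i * (eU l k * eL k j))"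
    by (rule sum.swap)
  also have "\<dots> = (\<Sum>l<n. eL l i * (\<Sum>k<n. eU l k * eL k j))"
    by (simp add: sum_distrib_left)
  also have "\<dots> = (\<Sum>l<n. eL l i * (if l = j then 1 else 0))"
    by (intro sum.cong refl) (simp add: inv ij)
  also have "\<dots> = eL j i" using ij by (simp add: if_distrib cong: if_cong)
  finally show ?thesis .
qed

lemma trace: "(\<Sum>i<n. \<Sum>j<n. eL j i * eU i j) = of_nat n"
proof -
  have "(\<Sum>j<n. eL j i * eU i j) = 1" if "i < n" for i
  proof -
    have "(\<Sum>j<n. eL j i * eU i j) = (\<Sum>j<n. eU i j * eL j i)" by (simp add: mult.commute)
    then show ?thesis using inv[OF that that] by simp
  qed
  then have "(\<Sum>i<n. \<Sum>j<n. eL j i * eU i j) = (\<Sum>i<n. (1::complex))"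
    by (intro sum.cong refl) simp
  then show ?thesis by simp
qed

abbreviation "G \<equiv> gop n eU"
abbreviation "XL \<equiv> xlow n eL"
abbreviation "DU \<equiv> dup n eU"

definition A :: "vec \<Rightarrow> vec" where "A v = (\<Sum>j<n. G j (XL j v))"
definition D :: "vec \<Rightarrow> vec" where "D v = (\<Sum>i<n. G i (dop i v))"
definition Q :: "vec \<Rightarrow> vec" where "Q v = (\<Sum>j<n. xop j (XL j v))"

lemma XL_eq: "XL j v = (\<Sum>k<n. vscale (eL j k) (xop k v))" by (simp add: xlow_def vsum_eq)
lemma DU_eq: "DU i v = (\<Sum>j<n. vscale (eU i j) (dop j v))" by (simp add: dup_def vsum_eq)

lemma lin_XL: "lin (XL j)"
  unfolding XL_eq[abs_def] by (intro lin_sumop lin_scaleop lin_xop)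
lemma lin_DU: "lin (DU j)"
  unfolding DU_eq[abs_def] by (intro lin_sumop lin_scaleop lin_dop)
lemma lin_A: "lin A"
  unfolding A_def[abs_def] by (rule lin_sumop, rule lin_comp[OF lin_gop lin_XL])
lemma lin_D: "lin D"
  unfolding D_def[abs_def] by (rule lin_sumop, rule lin_comp[OF lin_gop lin_dop])
lemma lin_Q: "lin Q"
  unfolding Q_def[abs_def] by (rule lin_sumop, rule lin_comp[OF lin_xop lin_XL])

lemmas X_lin[simp] = lin_add[OF lin_xop] lin_scale[OF lin_xop] lin_zero[OF lin_xop] lin_neg[OF lin_xop] lin_diff[OF lin_xop] lin_sum[OF lin_xop]
lemmas P_lin[simp] = lin_add[OF lin_dop] lin_scale[OF lin_dop] lin_zero[OF lin_dop] lin_neg[OF lin_dop] lin_diff[OF lin_dop] lin_sum[OF lin_dop]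
lemmas G_lin[simp] = lin_add[OF lin_gop] lin_scale[OF lin_gop] lin_zero[OF lin_gop] lin_neg[OF lin_gop] lin_diff[OF lin_gop] lin_sum[OF lin_gop]
lemmas XL_lin[simp] = lin_add[OF lin_XL] lin_scale[OF lin_XL] lin_zero[OF lin_XL] lin_neg[OF lin_XL] lin_diff[OF lin_XL] lin_sum[OF lin_XL]
lemmas DU_lin[simp] = lin_add[OF lin_DU] lin_scale[OF lin_DU] lin_zero[OF lin_DU] lin_neg[OF lin_DU] lin_diff[OF lin_DU] lin_sum[OF lin_DU]
lemmas A_lin[simp] = lin_add[OF lin_A] lin_scale[OF lin_A] lin_zero[OF lin_A] lin_neg[OF lin_A] lin_diff[OF lin_A] lin_sum[OF lin_A]
lemmas D_lin[simp] = lin_add[OF lin_D] lin_scale[OF lin_D] lin_zero[OF lin_D] lin_neg[OF lin_D] lin_diff[OF lin_D] lin_sum[OF lin_D]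
lemmas Q_lin[simp] = lin_add[OF lin_Q] lin_scale[OF lin_Q] lin_zero[OF lin_Q] lin_neg[OF lin_Q] lin_diff[OF lin_Q] lin_sum[OF lin_Q]

lemma sum_if_scale: "i < n \<Longrightarrow> (\<Sum>k<n. vscale (c k) (if i = k then v else 0)) = vscale (c i) v"
  by (simp add: if_distrib[of "vscale _"] cong: if_cong)

lemma sum_if_scale': "i < n \<Longrightarrow> (\<Sum>k<n. vscale (c k) (if k = i then v else 0)) = vscale (c i) v"
  by (simp add: if_distrib[of "vscale _"] cong: if_cong)

lemma sum_if': "i < n \<Longrightarrow> (\<Sum>k<n. (if k = i then (v::vec) else 0)) = v"
  by simp

(* normal forms: G outermost, then xop / XL, then dop *)
lemma X_G[simp]: "xop j (G i v) = G i (xop j v)" by (simp add: gop_xop)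
lemma P_G[simp]: "dop j (G i v) = G i (dop j v)" by (simp add: gop_dop)
lemma XL_G[simp]: "XL j (G i v) = G i (XL j v)" by (simp add: XL_eq)
lemma DU_G[simp]: "DU j (G i v) = G i (DU j v)" by (simp add: DU_eq)
lemma X_XL: "xop i (XL j v) = XL j (xop i v)" by (simp add: XL_eq xop_xop)
lemma XL_XL: "XL i (XL j v) = XL j (XL i v)"
proof -
  have "XL i (XL j v) = (\<Sum>k<n. \<Sum>l<n. vscale (eL i k * eL j l) (xop k (xop l v)))"
    by (simp add: XL_eq vscale_sum)
  also have "\<dots> = (\<Sum>l<n. \<Sum>k<n. vscale (eL i k * eL j l) (xop k (xop l v)))"
    by (rule sum.swap)
  also have "\<dots> = XL j (XL i v)"
    by (simp add: XL_eq vscale_sum xop_xop mult.commute)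
  finally show ?thesis .
qed
lemma P_XL: "i < n \<Longrightarrow> dop i (XL j v) = XL j (dop i v) + vscale (eL j i) v"
  by (simp add: XL_eq dop_xop sum.distrib sum_if_scale)
lemma P_X: "dop i (xop j v) = xop j (dop i v) + (if i = j then v else 0)" by (rule dop_xop)
lemma P_DU: "dop i (DU j v) = DU j (dop i v)" by (simp add: DU_eq dop_dop)

lemma G_Lg: "G i v = (\<lambda>a. Lg i (v a))" by (simp add: gop_def Lg_def fun_eq_iff)

definition vv :: "vec \<Rightarrow> bool" where "vv v \<longleftrightarrow> (\<forall>a. sv (v a))"

lemma anti_v: "vv v \<Longrightarrow> i < n \<Longrightarrow> j < n \<Longrightarrow> G i (G j v) + G j (G i v) = vscale (2 * eU i j) v"
proof (rule ext, rule ext)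
  fix a T assume v: "vv v" and ij: "i < n" "j < n"
  have "(Lg i (Lg j (v a)) + Lg j (Lg i (v a))) T = sm (2 * eU i j) (v a) T"
    using anti[OF _ ij] v by (simp add: vv_def)
  then show "(G i (G j v) + G j (G i v)) a T = vscale (2 * eU i j) v a T"
    by (simp add: G_Lg vscale_def sm_def)
qed

lemma vv_G: "i < n \<Longrightarrow> vv (G i v)" by (simp add: vv_def G_Lg Lg_sv)
lemma vv_intro: "(\<And>a T. T \<notin> clb n \<Longrightarrow> w a T = 0) \<Longrightarrow> vv w"
  unfolding vv_def sv_def by blast
lemma vvD: "vv w \<Longrightarrow> T \<notin> clb n \<Longrightarrow> w a T = 0"
  unfolding vv_def sv_def by blast
lemma vv_add: "vv v \<Longrightarrow> vv w \<Longrightarrow> vv (v + w)" by (rule vv_intro) (simp add: vvD)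
lemma vv_scale: "vv v \<Longrightarrow> vv (vscale c v)" by (auto simp: vv_def sv_def vscale_def)
lemma vv_zero: "vv 0" by (auto simp: vv_def sv_def)
lemma vv_sum: "(\<And>j. j \<in> K \<Longrightarrow> vv (f j)) \<Longrightarrow> vv (sum f K)"
  by (induction K rule: infinite_finite_induct) (auto simp: vv_zero vv_add)
lemma vv_X: "vv v \<Longrightarrow> vv (xop i v)" by (auto simp: vv_def sv_def xop_def)
lemma vv_P: "vv v \<Longrightarrow> vv (dop i v)" by (auto simp: vv_def sv_def dop_def)
lemma vv_XL: "vv v \<Longrightarrow> vv (XL j v)" by (simp add: XL_eq vv_sum vv_scale vv_X)
lemma vv_DU: "vv v \<Longrightarrow> vv (DU j v)" by (simp add: DU_eq vv_sum vv_scale vv_P)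
lemma vv_A: "vv (A v)" unfolding A_def by (rule vv_sum) (simp add: vv_G)
lemma vv_D: "vv (D v)" unfolding D_def by (rule vv_sum) (simp add: vv_G)
lemma vv_Q: "vv v \<Longrightarrow> vv (Q v)" by (simp add: Q_def vv_sum vv_X vv_XL)

lemma contract: "i < n \<Longrightarrow> (\<Sum>j<n. vscale (eU i j) (XL j u)) = xop i u"
proof -
  assume i: "i < n"
  have "(\<Sum>j<n. vscale (eU i j) (XL j u)) = (\<Sum>k<n. \<Sum>j<n. vscale (eU i j * eL j k) (xop k u))"
    by (simp add: XL_eq vscale_sum) (rule sum.swap)
  also have "\<dots> = (\<Sum>k<n. vscale (if i = k then 1 else 0) (xop k u))"
    by (intro sum.cong refl) (simp add: vscale_sum_left inv i)
  also have "\<dots> = xop i u" using i by (simp add: if_distrib[of "\<lambda>c. vscale c _"] cong: if_cong)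
  finally show ?thesis .
qed

lemma contractL: "k < n \<Longrightarrow> (\<Sum>j<n. vscale (eL j k) (xop j w)) = XL k w"
  by (simp add: XL_eq symL)

lemma D_X: "i < n \<Longrightarrow> D (xop i v) = xop i (D v) + G i v"
  by (simp add: D_def P_X sum.distrib if_distrib[of "G _"] cong: if_cong)

lemma D_XL: "D (XL j v) = XL j (D v) + (\<Sum>k<n. vscale (eL j k) (G k v))"
  by (simp add: XL_eq D_X sum.distrib)

lemma D_P: "D (dop i v) = dop i (D v)" by (simp add: D_def dop_dop)
lemma D_DU: "D (DU i v) = DU i (D v)" by (simp add: DU_eq D_P)

end

context wk
begin

lemma vscale_plus_self: "vscale c v + v = vscale (c + 1) v"
  by (simp add: fun_eq_iff vscale_def algebra_simps)

lemma euler: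
  assumes "hom n k g"
  shows "(\<Sum>i<n. xop i (dop i g)) = vscale (of_nat k) g"
proof (rule ext, rule ext)
  fix a S
  have xp: "xop i (dop i g) a S = of_nat (a i) * g a S" for i
    by (cases "a i") (auto simp: xop_def dop_def fun_upd_idem)
  have "(\<Sum>i<n. xop i (dop i g)) a S = (\<Sum>i<n. of_nat (a i) * g a S)"
    by (simp add: sum_fun_apply xp)
  also have "\<dots> = of_nat (mdeg n a) * g a S"
    by (simp add: mdeg_def sum_distrib_right)
  also have "\<dots> = of_nat k * g a S"
    using homD[OF assms, of a S] by (cases "mdeg n a = k") auto
  finally show "(\<Sum>i<n. xop i (dop i g)) a S = vscale (of_nat k) g a S"
    by (simp add: vscale_def)
qed

lemma H_hom:
  assumes "hom n k v"
  shows "Hop n v = vscale (- (of_nat k + of_nat n / 2)) v"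
proof -
  have "(\<Sum>i<n. dop i (xop i v) + xop i (dop i v)) = vscale 2 (\<Sum>i<n. xop i (dop i v)) + (\<Sum>i<n. v)"
    by (simp add: P_X sum.distrib vscale_sum fun_eq_iff vscale_def sum_fun_apply algebra_simps sum_distrib_left)
  also have "\<dots> = vscale (2 * of_nat k + of_nat n) v"
    by (simp add: euler[OF assms] fun_eq_iff vscale_def sum_fun_apply algebra_simps)
  finally have e: "(\<Sum>i<n. dop i (xop i v) + xop i (dop i v)) = vscale (2 * of_nat k + of_nat n) v" .
  show ?thesis
    unfolding Hop_def vsum_eq vadd_eq e by (simp add: algebra_simps)
qed

lemma sum_cong_lt: "(\<And>i. i < n \<Longrightarrow> f i = g i) \<Longrightarrow> (\<Sum>i<n. f i) = (\<Sum>i<n. g i)"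
  by (rule sum.cong) auto

lemma half_S2:
  assumes "vv g"
  shows "(\<Sum>i<n. \<Sum>j<n. vscale (eL j i) (G i (G j g))) = vscale (of_nat n) g"
proof -
  let ?S = "(\<Sum>i<n. \<Sum>j<n. vscale (eL j i) (G i (G j g)))"
  have sw: "?S = (\<Sum>i<n. \<Sum>j<n. vscale (eL j i) (G j (G i g)))"
  proof -
    have "?S = (\<Sum>j<n. \<Sum>i<n. vscale (eL j i) (G i (G j g)))" by (rule sum.swap)
    also have "\<dots> = (\<Sum>i<n. \<Sum>j<n. vscale (eL j i) (G j (G i g)))"
      by (intro sum_cong_lt) (simp add: symL)
    finally show ?thesis .
  qed
  have "?S + ?S = (\<Sum>i<n. \<Sum>j<n. vscale (eL j i) (G i (G j g) + G j (G i g)))"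
    by (subst (2) sw) (simp add: sum.distrib)
  also have "\<dots> = (\<Sum>i<n. \<Sum>j<n. vscale (eL j i * (2 * eU i j)) g)"
    by (intro sum_cong_lt) (simp add: anti_v assms)
  also have "\<dots> = vscale (2 * of_nat n) g"
  proof -
    have "(\<Sum>i<n. \<Sum>j<n. eL j i * (2 * eU i j)) = 2 * (\<Sum>i<n. \<Sum>j<n. eL j i * eU i j)"
      by (simp add: sum_distrib_left mult.left_commute)
    then have c: "(\<Sum>i<n. \<Sum>j<n. eL j i * (2 * eU i j)) = 2 * of_nat n" by (simp only: trace)
    show ?thesis by (simp only: vscale_sum_left c)
  qed
  finally have eq: "?S + ?S = vscale (2 * of_nat n) g" .
  show ?thesis
  proof (rule ext, rule ext)
    fix a T
    have "(?S + ?S) a T = vscale (2 * of_nat n) g a T" using eq by simp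
    then have "2 * ?S a T = 2 * (of_nat n * g a T)" by (simp add: vscale_def)
    then show "?S a T = vscale (of_nat n) g a T" by (simp add: vscale_def)
  qed
qed

lemma DA_AD:
  assumes "vv g"
  shows "D (A g) + A (D g) = vscale (of_nat n) g + vscale 2 (\<Sum>i<n. xop i (dop i g))"
proof -
  have 1: "D (A g) = (\<Sum>i<n. \<Sum>j<n. G i (G j (XL j (dop i g)))) + (\<Sum>i<n. \<Sum>j<n. vscale (eL j i) (G i (G j g)))"
  proof -
    have "D (A g) = (\<Sum>i<n. \<Sum>j<n. G i (G j (XL j (dop i g))) + vscale (eL j i) (G i (G j g)))"
      unfolding D_def A_def by (intro sum_cong_lt) (simp add: P_XL)
    then show ?thesis by (simp add: sum.distrib)
  qed
  have 2: "A (D g) = (\<Sum>i<n. \<Sum>j<n. G j (G i (XL j (dop i g))))"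
  proof -
    have "A (D g) = (\<Sum>j<n. \<Sum>i<n. G j (G i (XL j (dop i g))))"
      unfolding D_def A_def by simp
    also have "\<dots> = (\<Sum>i<n. \<Sum>j<n. G j (G i (XL j (dop i g))))" by (rule sum.swap)
    finally show ?thesis .
  qed
  have 3: "(\<Sum>i<n. \<Sum>j<n. G i (G j (XL j (dop i g)))) + (\<Sum>i<n. \<Sum>j<n. G j (G i (XL j (dop i g))))
     = vscale 2 (\<Sum>i<n. xop i (dop i g))"
  proof -
    have "(\<Sum>i<n. \<Sum>j<n. G i (G j (XL j (dop i g)))) + (\<Sum>i<n. \<Sum>j<n. G j (G i (XL j (dop i g))))
       = (\<Sum>i<n. \<Sum>j<n. G i (G j (XL j (dop i g))) + G j (G i (XL j (dop i g))))"
      by (simp add: sum.distrib)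
    also have "\<dots> = (\<Sum>i<n. \<Sum>j<n. vscale (2 * eU i j) (XL j (dop i g)))"
      by (intro sum_cong_lt) (simp add: anti_v vv_XL vv_P assms)
    also have "\<dots> = (\<Sum>i<n. vscale 2 (\<Sum>j<n. vscale (eU i j) (XL j (dop i g))))"
      by (simp add: vscale_sum)
    also have "\<dots> = (\<Sum>i<n. vscale 2 (xop i (dop i g)))"
      by (intro sum_cong_lt) (simp add: contract)
    finally show ?thesis by (simp add: vscale_sum)
  qed
  show ?thesis
    unfolding 1 2 using 3 half_S2[OF assms] by (simp add: add_ac)
qed


lemma anti_v': "vv v \<Longrightarrow> i < n \<Longrightarrow> j < n \<Longrightarrow> G j (G i v) = vscale (2 * eU i j) v - G i (G j v)"
  using anti_v[of v i j] by (metis add_diff_cancel_left')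

lemma D_G:
  assumes "vv v" "i < n"
  shows "D (G i v) = vscale 2 (DU i v) - G i (D v)"
proof -
  have "D (G i v) = (\<Sum>j<n. vscale (2 * eU i j) (dop j v) - G i (G j (dop j v)))"
    unfolding D_def by (intro sum_cong_lt) (simp add: anti_v'[OF vv_P[OF assms(1)] assms(2)])
  also have "\<dots> = vscale 2 (DU i v) - G i (D v)"
    by (simp add: sum_subtractf DU_eq D_def vscale_sum)
  finally show ?thesis .
qed

lemma D_Q: "D (Q w) = Q (D w) + vscale 2 (A w)"
proof -
  have "D (Q w) = (\<Sum>j<n. xop j (XL j (D w)) + xop j (\<Sum>k<n. vscale (eL j k) (G k w)) + G j (XL j w))"
    unfolding Q_def by (simp add: D_X D_XL)
  also have "\<dots> = Q (D w) + (\<Sum>j<n. \<Sum>k<n. vscale (eL j k) (G k (xop j w))) + A w"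
    by (simp add: sum.distrib Q_def A_def)
  also have "(\<Sum>j<n. \<Sum>k<n. vscale (eL j k) (G k (xop j w))) = (\<Sum>k<n. \<Sum>j<n. vscale (eL j k) (G k (xop j w)))"
    by (rule sum.swap)
  also have "\<dots> = (\<Sum>k<n. G k (XL k w))"
    by (intro sum_cong_lt) (simp add: contractL[symmetric])
  also have "\<dots> = A w" by (simp add: A_def)
  finally show ?thesis by (simp add: fun_eq_iff vscale_def)
qed

lemma Q_AA:
  assumes "vv w"
  shows "Q w = A (A w)"
proof -
  let ?T = "(\<Sum>j<n. \<Sum>l<n. G j (G l (XL j (XL l w))))"
  have T: "A (A w) = ?T" by (simp add: A_def)
  have sw: "?T = (\<Sum>j<n. \<Sum>l<n. G l (G j (XL j (XL l w))))"
  proof -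
    have "?T = (\<Sum>l<n. \<Sum>j<n. G j (G l (XL j (XL l w))))" by (rule sum.swap)
    also have "\<dots> = (\<Sum>j<n. \<Sum>l<n. G l (G j (XL j (XL l w))))"
      by (intro sum_cong_lt) (subst XL_XL, rule refl)
    finally show ?thesis .
  qed
  have "?T + ?T = (\<Sum>j<n. \<Sum>l<n. G j (G l (XL j (XL l w))) + G l (G j (XL j (XL l w))))"
    by (subst (2) sw) (simp add: sum.distrib)
  also have "\<dots> = (\<Sum>j<n. vscale 2 (\<Sum>l<n. vscale (eU j l) (XL l (XL j w))))"
  proof (intro sum_cong_lt)
    fix j assume j: "j < n"
    have "(\<Sum>l<n. G j (G l (XL j (XL l w))) + G l (G j (XL j (XL l w))))
        = (\<Sum>l<n. vscale 2 (vscale (eU j l) (XL l (XL j w))))"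
    proof (intro sum_cong_lt)
      fix l assume l: "l < n"
      have "G j (G l (XL j (XL l w))) + G l (G j (XL j (XL l w))) = vscale (2 * eU j l) (XL j (XL l w))"
        by (rule anti_v[OF vv_XL[OF vv_XL[OF assms]] j l])
      also have "\<dots> = vscale 2 (vscale (eU j l) (XL l (XL j w)))"
        by (subst XL_XL) simp
      finally show "G j (G l (XL j (XL l w))) + G l (G j (XL j (XL l w))) = vscale 2 (vscale (eU j l) (XL l (XL j w)))" .
    qed
    then show "(\<Sum>l<n. G j (G l (XL j (XL l w))) + G l (G j (XL j (XL l w))))
        = vscale 2 (\<Sum>l<n. vscale (eU j l) (XL l (XL j w)))" by (simp only: vscale_sum)
  qed
  also have "\<dots> = vscale 2 (Q w)"
    by (simp add: contract Q_def vscale_sum)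
  finally have eq: "?T + ?T = vscale 2 (Q w)" .
  show ?thesis unfolding T
  proof (rule ext, rule ext)
    fix a S
    have "(?T + ?T) a S = vscale 2 (Q w) a S" using eq by simp
    then have "2 * ?T a S = 2 * Q w a S" by (simp add: vscale_def)
    then show "Q w a S = ?T a S" by simp
  qed
qed

lemma hom_X: "i < n \<Longrightarrow> hom n k v \<Longrightarrow> hom n (Suc k) (xop i v)" by (rule hom_xop)
lemma hom_XL: "hom n k v \<Longrightarrow> hom n (Suc k) (XL j v)"
  unfolding XL_eq by (intro hom_sum hom_scale hom_xop) auto
lemma hom_A: "hom n k v \<Longrightarrow> hom n (Suc k) (A v)"
  unfolding A_def by (intro hom_sum hom_gop hom_XL)
lemma hom_Q: "hom n k v \<Longrightarrow> hom n (Suc (Suc k)) (Q v)"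
  unfolding Q_def by (intro hom_sum hom_xop hom_XL) auto
lemma hom_DU: "hom n (Suc k) v \<Longrightarrow> hom n k (DU j v)"
  unfolding DU_eq by (intro hom_sum hom_scale hom_dop) auto
lemma hom0_DU: "hom n 0 v \<Longrightarrow> DU j v = 0"
  unfolding DU_eq by (simp add: hom0_dop)
lemma hom_D: "hom n (Suc k) v \<Longrightarrow> hom n k (D v)"
  unfolding D_def by (intro hom_sum hom_gop hom_dop) auto
lemma hom0_D: "hom n 0 v \<Longrightarrow> D v = 0"
  unfolding D_def by (simp add: hom0_dop)
lemma hom_G: "hom n k v \<Longrightarrow> hom n k (G i v)" by (rule hom_gop)

lemma xhat_eq: "xhat n eU eL i v = Hop n (xop i v) + xop i v + (vscale (1/2) (A (G i v)) + vscale (1/2) (Q (DU i v)))"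
  unfolding xhat_def vadd_eq vsum_eq A_def Q_def by (rule refl)

lemma ghat_eq: "ghat n eU eL i v = Hop n (G i v) + G i v + vscale (-1) (A (DU i v))"
  unfolding ghat_def vadd_eq vsum_eq A_def by (rule refl)

lemma X_A: "xop i (A w) = A (xop i w)"
  by (simp add: A_def X_XL)


lemma xhat_main:
  assumes f: "vv f" "hom n k f" "D f = 0" and i: "i < n"
  shows "xhat n eU eL i f = vscale (- (of_nat k + of_nat n / 2)) (xop i f) + A (vscale (1/2) (G i f) + vscale (1/2) (A (DU i f)))"
    and "D (xhat n eU eL i f) = 0"
    and "vv (xhat n eU eL i f)"
    and "hom n (Suc k) (xhat n eU eL i f)"
proof -
  have hX: "hom n (Suc k) (xop i f)" by (rule hom_xop[OF i f(2)])
  have H: "Hop n (xop i f) = vscale (- (of_nat (Suc k) + of_nat n / 2)) (xop i f)" by (rule H_hom[OF hX])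
  have QA: "Q (DU i f) = A (A (DU i f))" by (rule Q_AA[OF vv_DU[OF f(1)]])
  show "xhat n eU eL i f = vscale (- (of_nat k + of_nat n / 2)) (xop i f) + A (vscale (1/2) (G i f) + vscale (1/2) (A (DU i f)))"
    unfolding xhat_eq H QA
    apply (simp only: A_lin)
    by (simp add: fun_eq_iff vscale_def algebra_simps)
  have d1: "D (xop i f) = G i f" using D_X[OF i, of f] f(3) by simp
  have d2: "D (A (G i f)) = vscale (of_nat n + 2 * of_nat k) (G i f) - vscale 2 (A (DU i f))"
  proof -
    have "D (A (G i f)) + A (D (G i f)) = vscale (of_nat n) (G i f) + vscale 2 (vscale (of_nat k) (G i f))"
      using DA_AD[OF vv_G[OF i], of f] euler[OF hom_gop[OF f(2)], of eU i] by simp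
    moreover have "A (D (G i f)) = vscale 2 (A (DU i f))" using D_G[OF f(1) i] f(3) by simp
    ultimately show ?thesis by (simp add: fun_eq_iff vscale_def algebra_simps eq_diff_eq)
  qed
  have d3: "D (Q (DU i f)) = vscale 2 (A (DU i f))" using D_Q[of "DU i f"] D_DU[of i f] f(3) by simp
  show "D (xhat n eU eL i f) = 0"
    unfolding xhat_eq H
    apply (simp only: D_lin d1 d2 d3)
    by (simp add: fun_eq_iff vscale_def field_simps)
  show "vv (xhat n eU eL i f)"
    unfolding xhat_eq H by (intro vv_add vv_scale vv_X vv_A vv_Q vv_DU f(1))
  have hQ: "hom n (Suc k) (Q (DU i f))"
  proof (cases k)
    case 0
    then show ?thesis using hom0_DU[of f i] f(2) by (simp add: hom_zero)
  next
    case (Suc k')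
    then show ?thesis using hom_Q[OF hom_DU[of k' f i]] f(2) by simp
  qed
  show "hom n (Suc k) (xhat n eU eL i f)"
    unfolding xhat_eq H by (intro hom_add hom_scale hX hom_A hom_gop f(2) hQ)
qed

definition cc :: "nat \<Rightarrow> complex" where "cc d = (\<Prod>t<d. - (of_nat t + of_nat n / 2))"

lemma chain:
  assumes "vv p" "hom n 0 p" "set al \<subseteq> {..<n}"
  shows "vv (foldr (xhat n eU eL) al p) \<and> hom n (length al) (foldr (xhat n eU eL) al p)
    \<and> D (foldr (xhat n eU eL) al p) = 0
    \<and> (\<exists>w. vv w \<and> foldr (xhat n eU eL) al p = vscale (cc (length al)) (foldr xop al p) + A w)"
  using assms(3)
proof (induction al)
  case Nil
  show ?case
  proof (intro conjI)
    show "vv (foldr (xhat n eU eL) [] p)" using assms(1) by simp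
    show "hom n (length []) (foldr (xhat n eU eL) [] p)" using assms(2) by simp
    show "D (foldr (xhat n eU eL) [] p) = 0" using hom0_D[OF assms(2)] by simp
    show "\<exists>w. vv w \<and> foldr (xhat n eU eL) [] p = vscale (cc (length [])) (foldr xop [] p) + A w"
      by (rule exI[of _ 0]) (simp add: cc_def vv_zero)
  qed
next
  case (Cons i al)
  let ?f = "foldr (xhat n eU eL) al p"
  have i: "i < n" using Cons.prems by simp
  have IHc: "vv ?f \<and> hom n (length al) ?f \<and> D ?f = 0
    \<and> (\<exists>w. vv w \<and> ?f = vscale (cc (length al)) (foldr xop al p) + A w)"
    using Cons.prems by (intro Cons.IH) auto
  then obtain w where IH: "vv ?f" "hom n (length al) ?f" "D ?f = 0"
    "?f = vscale (cc (length al)) (foldr xop al p) + A w" and vw: "vv w" by (elim conjE exE) blast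
  note M = xhat_main[OF IH(1-3) i]
  let ?c = "- (of_nat (length al) + of_nat n / 2) :: complex"
  let ?W = "vscale (1/2) (G i ?f) + vscale (1/2) (A (DU i ?f))"
  let ?X = "foldr xop al p"
  have "xhat n eU eL i ?f = vscale ?c (xop i ?f) + A ?W"
    by (rule M(1))
  also have "xop i ?f = vscale (cc (length al)) (xop i ?X) + A (xop i w)"
    by (subst IH(4)) (simp only: lin_add[OF lin_xop] lin_scale[OF lin_xop] X_A)
  finally have "xhat n eU eL i ?f = vscale ?c (vscale (cc (length al)) (xop i ?X) + A (xop i w)) + A ?W" .
  also have "\<dots> = vscale (?c * cc (length al)) (xop i ?X) + A (vscale ?c (xop i w) + ?W)"
    by (simp only: vscale_simps(1,4) lin_add[OF lin_A] lin_scale[OF lin_A] add.assoc)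
  also have "?c * cc (length al) = cc (Suc (length al))"
    by (simp add: cc_def mult.commute)
  finally have eq: "xhat n eU eL i ?f = vscale (cc (Suc (length al))) (xop i ?X) + A (vscale ?c (xop i w) + ?W)" .
  have vW: "vv (vscale ?c (xop i w) + ?W)"
    by (intro vv_add vv_scale vv_X vv_G vv_A vw i)
  show ?case
    unfolding foldr.simps o_apply length_Cons using M(2-4) eq vW by blast
qed

lemmas comp_lin = lin_add[OF lin_comp_op] lin_scale[OF lin_comp_op] lin_zero[OF lin_comp_op] lin_sum[OF lin_comp_op]

lemma comp_XL: "comp n (Suc j) (XL l v) = XL l (comp n j v)"
  unfolding XL_eq by (simp add: comp_lin) (intro sum_cong_lt, simp add: comp_xop)
lemma comp_A: "comp n (Suc j) (A v) = A (comp n j v)"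
  unfolding A_def by (simp add: comp_lin comp_gop comp_XL)
lemma comp_D: "comp n j (D v) = D (comp n (Suc j) v)"
  unfolding D_def by (simp add: comp_lin comp_gop) (intro sum_cong_lt, simp add: comp_dop)

lemma vscale_eq0: "c \<noteq> 0 \<Longrightarrow> vscale c g = 0 \<Longrightarrow> g = 0"
  by (auto simp: fun_eq_iff vscale_def)

lemma key:
  "\<forall>g (c::real). vv g \<and> hom n j g \<and> (c < 0 \<or> real n + 2 * real j \<le> c) \<and> A (D g) = vscale (complex_of_real c) g \<longrightarrow> g = 0"
proof (induction j)
  case 0
  show ?case
  proof (intro allI impI)
    fix g and c :: real
    assume h: "vv g \<and> hom n 0 g \<and> (c < 0 \<or> real n + 2 * real 0 \<le> c) \<and> A (D g) = vscale (complex_of_real c) g"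
    then have "D g = 0" using hom0_D by blast
    then have "vscale (complex_of_real c) g = 0" using h by simp
    moreover have "c \<noteq> 0" using h n1 by auto
    ultimately show "g = 0" using vscale_eq0 by (metis of_real_eq_0_iff)
  qed
next
  case (Suc j)
  show ?case
  proof (intro allI impI)
    fix g and c :: real
    assume h: "vv g \<and> hom n (Suc j) g \<and> (c < 0 \<or> real n + 2 * real (Suc j) \<le> c) \<and> A (D g) = vscale (complex_of_real c) g"
    have vg': "vv (D g)" by (rule vv_D)
    have hg': "hom n j (D g)" using hom_D h by blast
    have da: "D (A (D g)) + A (D (D g)) = vscale (of_nat n + 2 * of_nat j) (D g)"
      using DA_AD[OF vg'] euler[OF hg'] by (simp add: fun_eq_iff vscale_def algebra_simps)
    have "D (A (D g)) = vscale (complex_of_real c) (D g)" using h by simp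
    with da have "A (D (D g)) = vscale (complex_of_real (real n + 2 * real j - c)) (D g)"
      by (simp add: fun_eq_iff vscale_def algebra_simps eq_diff_eq)
    moreover have "(real n + 2 * real j - c) < 0 \<or> real n + 2 * real j \<le> real n + 2 * real j - c"
      using h by auto
    ultimately have "D g = 0" using Suc.IH vg' hg' by blast
    then have "vscale (complex_of_real c) g = 0" using h by simp
    moreover have "c \<noteq> 0" using h n1 by auto
    ultimately show "g = 0" using vscale_eq0 by (metis of_real_eq_0_iff)
  qed
qed

lemma uniq:
  assumes "vv W" "D (A W) = 0"
  shows "A W = 0"
proof -
  have "comp n j W = 0" for j
  proof -
    let ?g = "comp n j W"
    have vg: "vv ?g" by (rule vv_intro) (simp add: comp_def vvD[OF assms(1)])
    have hg: "hom n j ?g" by (rule hom_comp)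
    have "D (A ?g) = comp n j (D (A W))" by (simp add: comp_D comp_A)
    also have "\<dots> = 0" using assms(2) by (simp add: comp_lin)
    finally have z: "D (A ?g) = 0" .
    have e: "A (D ?g) = vscale (complex_of_real (real n + 2 * real j)) ?g"
      using DA_AD[OF vg] euler[OF hg] z by (simp add: fun_eq_iff vscale_def algebra_simps)
    have "(real n + 2 * real j) < 0 \<or> real n + 2 * real j \<le> real n + 2 * real j" by simp
    then show ?thesis using key[of j] vg hg e by blast
  qed
  then have "W = 0" by (rule comp_all_zero)
  then show ?thesis by simp
qed


definition eb :: "nat list \<Rightarrow> vec" where
  "eb S = (\<lambda>a T. if a = (\<lambda>_. 0) \<and> T = S then 1 else 0)"

lemma G_eb:
  assumes "S \<in> clb n" "i < n" "\<forall>x\<in>set S. i < x"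
  shows "G i (eb S) = eb (i # S)"
proof (rule ext)
  fix a
  have "eb S a = (if a = (\<lambda>_. 0) then dl S else 0)" by (auto simp: eb_def dl_def fun_eq_iff)
  then have "G i (eb S) a = (if a = (\<lambda>_. 0) then Lg i (dl S) else 0)"
    by (simp add: G_Lg)
  also have "\<dots> = (if a = (\<lambda>_. 0) then dl (i # S) else 0)"
    using Lg_dl_small[OF assms(1,3)] by (simp add: dl_Cons)
  also have "\<dots> = eb (i # S) a" by (auto simp: eb_def dl_def fun_eq_iff)
  finally show "G i (eb S) a = eb (i # S) a" .
qed

lemma hom_eb: "hom n 0 (eb S)"
  by (auto simp: hom_def eb_def mdeg_def)

lemma vv_eb: "S \<in> clb n \<Longrightarrow> vv (eb S)"
  by (rule vv_intro) (auto simp: eb_def)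

lemma gtilde_eb:
  assumes n2: "n \<noteq> 2" and "S \<in> clb n" "i < n" "\<forall>x\<in>set S. i < x"
  shows "gtilde n eU eL i (eb S) = eb (i # S)"
proof -
  have h: "hom n 0 (G i (eb S))" by (rule hom_gop[OF hom_eb])
  have "ghat n eU eL i (eb S) = vscale (1 - of_nat n / 2) (G i (eb S))"
    unfolding ghat_eq H_hom[OF h] hom0_DU[OF hom_eb]
    by (simp add: fun_eq_iff vscale_def algebra_simps)
  moreover have "(1 - of_nat n / 2 :: complex) \<noteq> 0"
  proof
    assume "(1 - of_nat n / 2 :: complex) = 0"
    then have "(of_nat n :: complex) = of_nat 2" by (simp add: field_simps)
    then show False using n2 by (simp only: of_nat_eq_iff)
  qed
  ultimately have "gtilde n eU eL i (eb S) = G i (eb S)"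
    by (simp add: gtilde_def)
  then show ?thesis using G_eb[OF assms(2-4)] by simp
qed

lemma foldr_gtilde:
  assumes n2: "n \<noteq> 2"
  shows "S \<in> clb n \<Longrightarrow> foldr (gtilde n eU eL) S vone = eb S"
proof (induction S)
  case Nil
  then show ?case by (simp add: vone_def eb_def)
next
  case (Cons s w)
  have w: "w \<in> clb n" "s < n" "\<forall>x\<in>set w. s < x" using Cons.prems by (auto simp: clb_Cons)
  then show ?case using Cons.IH gtilde_eb[OF n2 w] by simp
qed

definition pc :: "(nat list \<Rightarrow> complex) \<Rightarrow> vec" where
  "pc q = (\<lambda>a T. if a = (\<lambda>_. 0) \<and> T \<in> clb n then q T else 0)"

lemma ptilde_vone:
  assumes n2: "n \<noteq> 2"
  shows "ptilde n eU eL q vone = pc q"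
proof (rule ext, rule ext)
  fix a T
  have "ptilde n eU eL q vone a T = (\<Sum>S\<in>clb n. q S * eb S a T)"
    unfolding ptilde_def vsumS_def by (intro sum.cong refl) (simp add: foldr_gtilde[OF n2] vscale_def)
  also have "\<dots> = (\<Sum>S\<in>clb n. if S = T then (if a = (\<lambda>_. 0) then q S else 0) else 0)"
    by (intro sum.cong refl) (auto simp: eb_def)
  also have "\<dots> = pc q a T" by (simp add: pc_def)
  finally show "ptilde n eU eL q vone a T = pc q a T" .
qed

lemma vv_pc: "vv (pc q)" by (rule vv_intro) (simp add: pc_def)
lemma hom_pc: "hom n 0 (pc q)" by (auto simp: hom_def pc_def mdeg_def)

lemma expo_Cons: "expo (i # al) = (expo al)(i := Suc (expo al i))"
  by (auto simp: expo_def fun_eq_iff)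

lemma foldr_xop_pc:
  "foldr xop al (pc q) = (\<lambda>a T. if a = expo al \<and> T \<in> clb n then q T else 0)"
proof (induction al)
  case Nil
  then show ?case by (simp add: pc_def expo_def)
next
  case (Cons i al)
  have key: "(0 < a i \<and> a(i := a i - 1) = e) \<longleftrightarrow> a = e(i := Suc (e i))" for a e :: "nat \<Rightarrow> nat"
  proof
    assume h: "0 < a i \<and> a(i := a i - 1) = e"
    show "a = e(i := Suc (e i))"
    proof (rule ext)
      fix x
      show "a x = (e(i := Suc (e i))) x"
      proof (cases "x = i")
        case True
        then show ?thesis using h by auto
      next
        case False
        have "(a(i := a i - 1)) x = e x" using h by simp
        then show ?thesis using False by simp
      qed
    qed
  next
    assume h: "a = e(i := Suc (e i))"
    then show "0 < a i \<and> a(i := a i - 1) = e" by (auto simp: fun_eq_iff)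
  qed
  have "foldr xop (i # al) (pc q) = xop i (\<lambda>a T. if a = expo al \<and> T \<in> clb n then q T else 0)"
    using Cons.IH by simp
  also have "\<dots> = (\<lambda>a T. if a = expo (i # al) \<and> T \<in> clb n then q T else 0)"
    unfolding xop_def expo_Cons
  proof (intro ext)
    fix a T
    show "(if 0 < a i then if a(i := a i - 1) = expo al \<and> T \<in> clb n then q T else 0 else 0) =
          (if a = (expo al)(i := Suc (expo al i)) \<and> T \<in> clb n then q T else 0)"
      using key[of a "expo al"] by auto
  qed
  finally show ?case .
qed


lemma hc_cc: "hatcoef n d * cc d = 1"
proof -
  let ?g = "\<lambda>t::nat. of_nat n / 2 + of_nat t :: complex"
  have nz: "?g t \<noteq> 0" for t
  proof
    assume "?g t = 0"
    then have "(of_nat (n + 2 * t) :: complex) = 0" by (simp add: field_simps)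
    then show False using n1 by (simp only: of_nat_eq_0_iff)
  qed
  have P: "(\<Prod>k = 1..d. of_nat n / 2 + of_nat d - of_nat k :: complex) = (\<Prod>t<d. ?g t)"
  proof -
    have "(\<Prod>k = 1..d. of_nat n / 2 + of_nat d - of_nat k :: complex)
        = (\<Prod>k<d. of_nat n / 2 + of_nat d - of_nat (Suc k))"
      using prod.atLeast1_atMost_eq[of "\<lambda>k. of_nat n / 2 + of_nat d - of_nat k :: complex" d] by simp
    also have "\<dots> = (\<Prod>k<d. ?g (d - Suc k))"
      by (intro prod.cong refl) (simp add: of_nat_diff)
    also have "\<dots> = (\<Prod>t<d. ?g t)" by (rule prod.nat_diff_reindex)
    finally show ?thesis .
  qed
  have C: "cc d = (-1) ^ d * (\<Prod>t<d. ?g t)"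
    unfolding cc_def by (subst prod_uminus) (simp add: add.commute)
  have "(\<Prod>t<d. ?g t) \<noteq> 0" using nz by (simp add: prod_zero_iff)
  then show ?thesis unfolding hatcoef_def P C by (simp add: field_simps)
qed

end

lemma expo_Cons': "expo (i # al) = (expo al)(i := Suc (expo al i))"
  by (auto simp: expo_def fun_eq_iff)

lemma length_mdeg: "set al \<subseteq> {..<n} \<Longrightarrow> length al = mdeg n (expo al)"
proof (induction al)
  case Nil
  then show ?case by (simp add: mdeg_def expo_def)
next
  case (Cons i al)
  have i: "i < n" and st: "set al \<subseteq> {..<n}" using Cons.prems by auto
  have "mdeg n (expo (i # al)) = Suc (mdeg n (expo al))" unfolding expo_Cons' by (rule mdeg_inc[OF i])
  then show ?case using Cons.IH[OF st] by simp
qed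

lemma finite_mis: "finite (mis n d)"
proof -
  have "mis n d \<subseteq> {xs. set xs \<subseteq> {..<n} \<and> length xs = d}" by (auto simp: mis_def)
  moreover have "finite {xs. set xs \<subseteq> {..<n} \<and> length xs = d}"
    by (rule finite_lists_length_eq) simp
  ultimately show ?thesis by (rule finite_subset)
qed

lemma canon:
  assumes supp: "\<forall>i\<ge>n. a i = 0"
  obtains al0 where "al0 \<in> mis n (mdeg n a)" "expo al0 = a"
    "\<And>d al. al \<in> mis n d \<Longrightarrow> expo al = a \<Longrightarrow> al = al0"
proof -
  define M where "M = (\<Sum>i<n. replicate_mset (a i) i)"
  define al0 where "al0 = sorted_list_of_multiset M"
  have cM: "count M x = a x" for x
  proof -
    have "count M x = (\<Sum>i<n. count (replicate_mset (a i) i) x)" by (simp add: M_def count_sum)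
    also have "\<dots> = (\<Sum>i<n. if x = i then a i else 0)" by (intro sum.cong refl) simp
    also have "\<dots> = a x" using supp by (cases "x < n") auto
    finally show ?thesis .
  qed
  have ex: "expo al0 = a"
    by (auto simp: expo_def fun_eq_iff al0_def count_mset[symmetric] cM)
  have st: "set al0 \<subseteq> {..<n}"
  proof
    fix x assume "x \<in> set al0"
    then have "count (mset al0) x > 0" by (rule count_mset_gt_0)
    then have "a x > 0" by (simp add: al0_def cM)
    then show "x \<in> {..<n}" using supp by (cases "x < n") auto
  qed
  have mem: "al0 \<in> mis n (mdeg n a)"
    using st length_mdeg[OF st] ex by (simp add: mis_def al0_def)
  have un: "al = al0" if "al \<in> mis n d" "expo al = a" for d al
  proof -
    have "mset al = mset al0"
    proof (rule multiset_eqI)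
      fix x
      have "count (mset al) x = expo al x" by (simp add: count_mset expo_def)
      also have "\<dots> = expo al0 x" using that(2) ex by simp
      also have "\<dots> = count (mset al0) x" by (simp add: count_mset expo_def)
      finally show "count (mset al) x = count (mset al0) x" .
    qed
    moreover have "sorted al" using that(1) by (simp add: mis_def)
    ultimately have "sort al0 = al" by (rule properties_for_sort)
    moreover have "sort al0 = al0" by (simp add: al0_def sorted_sort_id)
    ultimately show ?thesis by simp
  qed
  show ?thesis by (rule that[OF mem ex un])
qed

lemma decomp:
  assumes iv: "is_vec n phi" and deg: "\<forall>a S. phi a S \<noteq> 0 \<longrightarrow> mdeg n a \<le> m"
  shows "(\<Sum>d\<in>{..m}. \<Sum>al\<in>mis n d. (\<lambda>a T. if a = expo al \<and> T \<in> clb n then phi (expo al) T else 0)) = phi"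
proof (rule ext, rule ext)
  fix a T
  have "(\<Sum>d\<in>{..m}. \<Sum>al\<in>mis n d. (\<lambda>a T. if a = expo al \<and> T \<in> clb n then phi (expo al) T else 0)) a T
      = (\<Sum>d\<in>{..m}. \<Sum>al\<in>mis n d. if a = expo al then phi a T else 0)"
  proof -
    have hT: "T \<in> clb n" if "phi b T \<noteq> 0" for b using iv that by (auto simp: is_vec_def)
    have "(if a = expo al \<and> T \<in> clb n then phi (expo al) T else 0) = (if a = expo al then phi a T else 0)" for al
      by (cases "a = expo al"; cases "T \<in> clb n") (auto dest: hT)
    then show ?thesis by (simp add: sum_fun_apply)
  qed
  also have "\<dots> = phi a T"
  proof (cases "phi a T = 0")
    case True
    then show ?thesis by (auto intro!: sum.neutral)
  next
    case False
    have supp: "\<forall>i\<ge>n. a i = 0" using iv False by (auto simp: is_vec_def)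
    have dm: "mdeg n a \<le> m" using deg False by auto
    obtain al0 where al0: "al0 \<in> mis n (mdeg n a)" "expo al0 = a"
      "\<And>d al. al \<in> mis n d \<Longrightarrow> expo al = a \<Longrightarrow> al = al0" using canon[OF supp] by blast
    have inner: "(\<Sum>al\<in>mis n d. if a = expo al then phi a T else 0) = (if d = mdeg n a then phi a T else 0)" for d
    proof -
      have "(\<Sum>al\<in>mis n d. if a = expo al then phi a T else 0) = (\<Sum>al\<in>mis n d. if al = al0 then phi a T else 0)"
      proof (intro sum.cong refl)
        fix al assume "al \<in> mis n d"
        then have "(a = expo al) = (al = al0)" using al0(2,3) by blast
        then show "(if a = expo al then phi a T else 0) = (if al = al0 then phi a T else 0)" by simp
      qed
      also have "\<dots> = (if al0 \<in> mis n d then phi a T else 0)" by (simp add: finite_mis)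
      also have "(al0 \<in> mis n d) = (d = mdeg n a)"
        using al0(1) by (auto simp: mis_def)
      finally show ?thesis .
    qed
    show ?thesis using dm by (simp add: inner)
  qed
  finally show "(\<Sum>d\<in>{..m}. \<Sum>al\<in>mis n d. (\<lambda>a T. if a = expo al \<and> T \<in> clb n then phi (expo al) T else 0)) a T = phi a T" .
qed


theorem proposition7p4:
  fixes n m :: nat and eU eL :: "nat \<Rightarrow> nat \<Rightarrow> complex" and phi :: vec
  assumes "1 \<le> n" and "n \<noteq> 2"
    and "\<forall>i<n. \<forall>j<n. eU i j = eU j i"
    and "\<forall>i<n. \<forall>j<n. (\<Sum>k<n. eU i k * eL k j) = (if i = j then 1 else 0)"
    and "phi \<in> Vplus n eU"
    and "\<forall>a S. phi a S \<noteq> 0 \<longrightarrow> mdeg n a \<le> m"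
    and "\<exists>a S. phi a S \<noteq> 0 \<and> mdeg n a = m"
  shows "phihat n eU eL m phi vone = phi"
proof -
  interpret wk n eU eL
    by unfold_locales (use assms(1,3,4) in auto)
  have iv: "is_vec n phi" and X0: "Xop n eU phi = (\<lambda>a S. 0)" using assms(5) by (auto simp: Vplus_def)
  have Dphi: "D phi = 0"
  proof -
    have "Xop n eU phi = vscale (\<i> / complex_of_real (sqrt 2)) (D phi)" by (simp add: Xop_def vsum_eq D_def)
    moreover have "(\<lambda>a S. 0) = (0::vec)" by (simp add: fun_eq_iff)
    moreover have "\<i> / complex_of_real (sqrt 2) \<noteq> 0" by simp
    ultimately show ?thesis using X0 vscale_eq0 by metis
  qed
  define F where "F al = foldr (xhat n eU eL) al (pc (pcoef phi al))" for al
  define Xs where "Xs al = foldr xop al (pc (pcoef phi al))" for al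
  have ch: "vv (F al) \<and> hom n (length al) (F al) \<and> D (F al) = 0
      \<and> (\<exists>w. vv w \<and> F al = vscale (cc (length al)) (Xs al) + A w)" if "set al \<subseteq> {..<n}" for al
    unfolding F_def Xs_def by (rule chain[OF vv_pc hom_pc that])
  have "\<forall>al. \<exists>w. set al \<subseteq> {..<n} \<longrightarrow> vv w \<and> F al = vscale (cc (length al)) (Xs al) + A w"
    using ch by blast
  then obtain wf where wf: "\<And>al. set al \<subseteq> {..<n} \<Longrightarrow> vv (wf al) \<and> F al = vscale (cc (length al)) (Xs al) + A (wf al)"
    by metis
  have mis: "set al \<subseteq> {..<n} \<and> length al = d" if "al \<in> mis n d" for al d using that by (simp add: mis_def)
  have ph: "phihat n eU eL m phi vone = (\<Sum>d\<in>{..m}. \<Sum>al\<in>mis n d. vscale (hatcoef n d) (F al))"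
    by (simp add: phihat_def phihat_d_def vsumS_eq ptilde_vone[OF assms(2)] F_def)
  define Wt where "Wt = (\<Sum>d\<in>{..m}. \<Sum>al\<in>mis n d. vscale (hatcoef n d) (wf al))"
  have trm: "vscale (hatcoef n d) (F al) = Xs al + A (vscale (hatcoef n d) (wf al))" if "al \<in> mis n d" for al d
  proof -
    have "F al = vscale (cc d) (Xs al) + A (wf al)" using wf mis[OF that] by auto
    then show ?thesis by (simp add: hc_cc)
  qed
  have "phihat n eU eL m phi vone = (\<Sum>d\<in>{..m}. \<Sum>al\<in>mis n d. Xs al + A (vscale (hatcoef n d) (wf al)))"
    unfolding ph by (intro sum.cong refl) (simp add: trm)
  also have "\<dots> = (\<Sum>d\<in>{..m}. \<Sum>al\<in>mis n d. Xs al) + A Wt"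
    by (simp add: sum.distrib Wt_def)
  finally have eq: "phihat n eU eL m phi vone = (\<Sum>d\<in>{..m}. \<Sum>al\<in>mis n d. Xs al) + A Wt" .
  have dec: "(\<Sum>d\<in>{..m}. \<Sum>al\<in>mis n d. Xs al) = phi"
  proof -
    have "Xs al = (\<lambda>a T. if a = expo al \<and> T \<in> clb n then phi (expo al) T else 0)" for al
      unfolding Xs_def foldr_xop_pc pcoef_def by (rule refl)
    then show ?thesis using decomp[OF iv assms(6)] by simp
  qed
  have DF: "D (phihat n eU eL m phi vone) = 0"
  proof -
    have "D (F al) = 0" if "al \<in> mis n d" for al d using ch mis[OF that] by blast
    then show ?thesis unfolding ph by simp
  qed
  have vW: "vv Wt" unfolding Wt_def
    by (intro vv_sum vv_scale) (use wf mis in blast)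
  have "D (A Wt) = 0" using DF Dphi unfolding eq dec by simp
  then have "A Wt = 0" by (rule uniq[OF vW])
  then show ?thesis using eq dec by simp
qed

end
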